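(* Let $Z\in\mathbb{R}^{p_1\times p_2}$ have independent entries $Z_{ij}\sim N(0,\sigma_j^2)$, where $\sigma_1,\dots,\sigma_{p_2}\ge 0$. Then there is a universal constant $c>0$ such that \[ \mathbb{E}\|ZZ^\top-\mathbb{E}ZZ^\top\|\ge c\left(\sqrt{p_1\sum_{j}\sigma_j^4}+p_1\max_j\sigma_j^2\right). \]
   Context: $\|\cdot\|$ is the spectral norm. *)

theory Defs
  imports "HOL-Probability.Probability"
begin

definition std_gaussian :: "real measure" where
  "std_gaussian = density lborel std_normal_density"

definition gauss_array_space :: "nat \<Rightarrow> nat \<Rightarrow> (nat \<times> nat \<Rightarrow> real) measure" where
  "gauss_array_space p1 p2 = PiM ({..<p1} \<times> {..<p2}) (\<lambda>_. std_gaussian)"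

definition spec_norm :: "nat \<Rightarrow> nat \<Rightarrow> (nat \<Rightarrow> nat \<Rightarrow> real) \<Rightarrow> real" where
  "spec_norm m n A =
     (SUP x \<in> {x :: nat \<Rightarrow> real. (\<Sum>j<n. (x j)\<^sup>2) \<le> 1}.
        sqrt (\<Sum>i<m. (\<Sum>j<n. A i j * x j)\<^sup>2))"

end

theory Submission
  imports Defs
begin

abbreviation "G \<equiv> std_gaussian"

lemma G_prob: "prob_space G"
  unfolding std_gaussian_def by (rule prob_space_normal_density) simp

lemma sets_G[simp, measurable_cong]: "sets G = sets borel"
  unfolding std_gaussian_def by simp

lemma space_G[simp]: "space G = UNIV"
  unfolding std_gaussian_def by simp

lemma integrable_G_iff:
  assumes [measurable]: "f \<in> borel_measurable borel"
  shows "integrable G f \<longleftrightarrow> integrable lborel (\<lambda>x. std_normal_density x * f x)"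
  unfolding std_gaussian_def
  by (subst integrable_density) auto

lemma integral_G:
  assumes [measurable]: "f \<in> borel_measurable borel"
  shows "integral\<^sup>L G f = integral\<^sup>L lborel (\<lambda>x. std_normal_density x * f x)"
  unfolding std_gaussian_def
  by (subst integral_density) auto

lemma G_int_pow: "integrable G (\<lambda>x. x ^ k)"
  by (subst integrable_G_iff) (auto intro: integrable_std_normal_moment)

lemma G_int_abs: "integrable G (\<lambda>x. \<bar>x\<bar>)"
  using integrable_std_normal_moment_abs[of 1] by (subst integrable_G_iff) auto

lemma G_mom_odd: "integral\<^sup>L G (\<lambda>x. x ^ (2*k+1)) = 0"
  by (subst integral_G, simp, rule integral_std_normal_moment_odd)

lemma G_mom_even: "integral\<^sup>L G (\<lambda>x. x ^ (2*k)) = fact (2 * k) / (2^k * fact k)"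
  by (subst integral_G) (auto simp: integral_std_normal_moment_even)

lemma G_abs: "integral\<^sup>L G (\<lambda>x. \<bar>x\<bar>) = sqrt (2/pi)"
  using integral_std_normal_moment_abs_odd[of 0] by (subst integral_G) auto

lemma G_m1: "integral\<^sup>L G (\<lambda>x. x) = 0" using G_mom_odd[of 0] by simp
lemma G_m2: "integral\<^sup>L G (\<lambda>x. x^2) = 1" using G_mom_even[of 1] by simp
lemma G_m4: "integral\<^sup>L G (\<lambda>x. x^4) = 3" using G_mom_even[of 2] by (simp add: fact_numeral)
lemma G_m6: "integral\<^sup>L G (\<lambda>x. x^6) = 15" using G_mom_even[of 3] by (simp add: fact_numeral)
lemma G_m8: "integral\<^sup>L G (\<lambda>x. x^8) = 105" using G_mom_even[of 4] by (simp add: fact_numeral)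

interpretation G: prob_space G by (rule G_prob)

lemma G_int_const: "integrable G (\<lambda>x. c::real)" by simp

context fixes I :: "'i set" begin

abbreviation "MM \<equiv> PiM I (\<lambda>_. G)"

lemma MM_prob: "prob_space MM"
  by (rule prob_space_PiM) (rule G_prob)

lemma comp_meas[measurable]: "c \<in> I \<Longrightarrow> (\<lambda>\<omega>. \<omega> c) \<in> borel_measurable MM"
  using measurable_component_singleton[of c I "\<lambda>_. G"]
  by (simp add: measurable_cong_sets[OF refl sets_G])

lemma prod_lemma:
  fixes f :: "'i \<Rightarrow> real \<Rightarrow> real"
  assumes "finite I" "C \<subseteq> I" "\<And>c. c \<in> C \<Longrightarrow> integrable G (f c)"
  shows "integrable MM (\<lambda>\<omega>. \<Prod>c\<in>C. f c (\<omega> c))"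
    "integral\<^sup>L MM (\<lambda>\<omega>. \<Prod>c\<in>C. f c (\<omega> c)) = (\<Prod>c\<in>C. integral\<^sup>L G (f c))"
proof -
  interpret product_prob_space "\<lambda>_. G" I by unfold_locales
  define f' where "f' c = (if c \<in> C then f c else (\<lambda>_. 1))" for c
  have i: "\<And>c. c \<in> I \<Longrightarrow> integrable G (f' c)" using assms by (auto simp: f'_def)
  have eq: "(\<Prod>c\<in>C. f c (\<omega> c)) = (\<Prod>c\<in>I. f' c (\<omega> c))" for \<omega>
    using assms(1,2) unfolding f'_def by (intro prod.mono_neutral_cong_left) auto
  have eq2: "(\<Prod>c\<in>C. integral\<^sup>L G (f c)) = (\<Prod>c\<in>I. integral\<^sup>L G (f' c))"
    using assms(1,2) unfolding f'_def by (intro prod.mono_neutral_cong_left) (auto simp: G.prob_space[simplified])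
  show "integrable MM (\<lambda>\<omega>. \<Prod>c\<in>C. f c (\<omega> c))"
    unfolding eq by (rule product_integrable_prod[OF assms(1) i])
  show "integral\<^sup>L MM (\<lambda>\<omega>. \<Prod>c\<in>C. f c (\<omega> c)) = (\<Prod>c\<in>C. integral\<^sup>L G (f c))"
    unfolding eq eq2 by (rule product_integral_prod[OF assms(1) i])
qed

lemma E1:
  fixes f :: "real \<Rightarrow> real"
  assumes "finite I" "a \<in> I" "integrable G f"
  shows "integrable MM (\<lambda>\<omega>. f (\<omega> a))" "integral\<^sup>L MM (\<lambda>\<omega>. f (\<omega> a)) = integral\<^sup>L G f"
  using prod_lemma[OF assms(1), of "{a}" "\<lambda>_. f"] assms by auto

lemma E2:
  fixes f g :: "real \<Rightarrow> real"
  assumes "finite I" "a \<in> I" "b \<in> I" "a \<noteq> b" "integrable G f" "integrable G g"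
  shows "integrable MM (\<lambda>\<omega>. f (\<omega> a) * g (\<omega> b))"
    "integral\<^sup>L MM (\<lambda>\<omega>. f (\<omega> a) * g (\<omega> b)) = integral\<^sup>L G f * integral\<^sup>L G g"
  using prod_lemma[OF assms(1), of "{a,b}" "\<lambda>c. if c = a then f else g"] assms by auto

lemma E4:
  fixes f g h k :: "real \<Rightarrow> real"
  assumes "finite I" "a \<in> I" "b \<in> I" "c \<in> I" "d \<in> I"
    "a \<noteq> b" "a \<noteq> c" "a \<noteq> d" "b \<noteq> c" "b \<noteq> d" "c \<noteq> d"
    "integrable G f" "integrable G g" "integrable G h" "integrable G k"
  shows "integral\<^sup>L MM (\<lambda>\<omega>. f (\<omega> a) * g (\<omega> b) * h (\<omega> c) * k (\<omega> d))
       = integral\<^sup>L G f * integral\<^sup>L G g * integral\<^sup>L G h * integral\<^sup>L G k"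
  using prod_lemma[OF assms(1), of "{a,b,c,d}"
      "\<lambda>x. if x = a then f else if x = b then g else if x = c then h else k"] assms
  by (auto simp: mult.assoc)

lemma coord_indep:
  assumes "I \<noteq> {}"
  shows "prob_space.indep_vars MM (\<lambda>_. G) (\<lambda>c \<omega>. \<omega> c) I"
proof -
  interpret P: prob_space MM by (rule MM_prob)
  have rv: "\<And>i. i \<in> I \<Longrightarrow> (\<lambda>\<omega>. \<omega> i) \<in> measurable MM G"
    by (rule measurable_component_singleton)
  have d1: "distr MM MM (\<lambda>x. \<lambda>i\<in>I. x i) = distr MM MM (\<lambda>x. x)"
    by (rule distr_cong) (auto simp: space_PiM)
  have d2: "(\<Pi>\<^sub>M i\<in>I. distr MM G (\<lambda>\<omega>. \<omega> i)) = MM"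
    by (rule PiM_cong) (auto intro: distr_PiM_component G_prob)
  show ?thesis
    by (subst P.indep_vars_iff_distr_eq_PiM'[OF assms rv]) (auto simp: d1 d2 distr_id)
qed

end

lemma abs_poly_bound:
  fixes x t :: real assumes "t > 0"
  shows "\<bar>x\<bar> \<ge> (3 * t^2 * x^2 - x^4) / (2 * t^3)"
proof -
  define y where "y = \<bar>x\<bar>"
  have y0: "y \<ge> 0" by (simp add: y_def)
  have x2: "x^2 = y^2" "x^4 = y^4" by (simp_all add: y_def power_even_abs_numeral)
  have "2*t^3*y - 3*t^2*y^2 + y^4 = y * (y - t)^2 * (y + 2*t)"
    by (simp add: power2_eq_square power3_eq_cube power4_eq_xxxx algebra_simps)
  also have "\<dots> \<ge> 0" using y0 assms by (intro mult_nonneg_nonneg) auto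
  finally have "3 * t^2 * y^2 - y^4 \<le> 2*t^3*y" by linarith
  then show ?thesis using assms by (simp add: x2 divide_le_eq y_def[symmetric] mult.commute)
qed

context prob_space begin

lemma abs_lower:
  fixes X :: "'a \<Rightarrow> real"
  assumes [measurable]: "X \<in> borel_measurable M"
    and i2: "integrable M (\<lambda>\<omega>. X \<omega>^2)" and i4: "integrable M (\<lambda>\<omega>. X \<omega>^4)"
    and m2: "expectation (\<lambda>\<omega>. X \<omega>^2) = m2"
    and m4: "expectation (\<lambda>\<omega>. X \<omega>^4) \<le> K * m2^2" and K: "K > 0"
  shows "integrable M (\<lambda>\<omega>. \<bar>X \<omega>\<bar>)" "expectation (\<lambda>\<omega>. \<bar>X \<omega>\<bar>) \<ge> sqrt m2 / sqrt K"
proof -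
  show ia: "integrable M (\<lambda>\<omega>. \<bar>X \<omega>\<bar>)"
  proof (rule Bochner_Integration.integrable_bound[of _ "\<lambda>\<omega>. 1 + X \<omega>^2"])
    show "integrable M (\<lambda>\<omega>. 1 + X \<omega>^2)" using i2 by simp
    show "AE x in M. norm \<bar>X x\<bar> \<le> norm (1 + (X x)\<^sup>2)"
    proof (intro AE_I2)
      fix x
      have "\<bar>X x\<bar> \<le> 1 + (X x)^2"
      proof (cases "\<bar>X x\<bar> \<le> 1")
        case True then show ?thesis using zero_le_power2[of "X x"] by linarith
      next
        case False
        then have "\<bar>X x\<bar> * 1 \<le> \<bar>X x\<bar> * \<bar>X x\<bar>" by (intro mult_left_mono) auto
        then have "\<bar>X x\<bar> \<le> (X x)^2" by (simp add: power2_eq_square)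
        then show ?thesis by linarith
      qed
      moreover have h: "\<bar>1 + (X x)^2\<bar> = 1 + (X x)^2" by (rule abs_of_nonneg) simp
      ultimately show "norm \<bar>X x\<bar> \<le> norm (1 + (X x)\<^sup>2)" by (simp only: real_norm_def abs_idempotent h)
    qed
  qed (rule borel_measurable_abs[OF assms(1)])
  have m2nn: "m2 \<ge> 0" using m2[symmetric] by (simp add: integral_nonneg_AE)
  show "expectation (\<lambda>\<omega>. \<bar>X \<omega>\<bar>) \<ge> sqrt m2 / sqrt K"
  proof (cases "m2 = 0")
    case True then show ?thesis by (simp add: integral_nonneg_AE)
  next
    case False
    then have mp: "m2 > 0" using m2nn by simp
    define t where "t = sqrt (K * m2)"
    have t0: "t > 0" using mp K by (simp add: t_def)
    have iq: "integrable M (\<lambda>\<omega>. (3 * t^2 * X \<omega>^2 - X \<omega>^4) / (2 * t^3))"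
      by (intro integrable_divide Bochner_Integration.integrable_diff integrable_mult_right i2 i4)
    have "expectation (\<lambda>\<omega>. (3 * t^2 * X \<omega>^2 - X \<omega>^4) / (2 * t^3)) \<le> expectation (\<lambda>\<omega>. \<bar>X \<omega>\<bar>)"
      by (rule integral_mono[OF iq ia]) (rule abs_poly_bound[OF t0])
    moreover have "expectation (\<lambda>\<omega>. (3 * t^2 * X \<omega>^2 - X \<omega>^4) / (2 * t^3))
        = (3 * t^2 * m2 - expectation (\<lambda>\<omega>. X \<omega>^4)) / (2 * t^3)"
    proof -
      have "expectation (\<lambda>\<omega>. 3 * t^2 * X \<omega>^2 - X \<omega>^4) = expectation (\<lambda>\<omega>. 3 * t^2 * X \<omega>^2) - expectation (\<lambda>\<omega>. X \<omega>^4)"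
        by (rule Bochner_Integration.integral_diff[OF integrable_mult_right[OF i2] i4])
      also have "expectation (\<lambda>\<omega>. 3 * t^2 * X \<omega>^2) = 3 * t^2 * m2"
        using m2 by simp
      finally show ?thesis by simp
    qed
    moreover have "(3 * t^2 * m2 - K * m2^2) / (2 * t^3) \<le> (3 * t^2 * m2 - expectation (\<lambda>\<omega>. X \<omega>^4)) / (2 * t^3)"
      using m4 t0 by (intro divide_right_mono) auto
    moreover have "(3 * t^2 * m2 - K * m2^2) / (2 * t^3) = sqrt m2 / sqrt K"
    proof -
      have tt: "t^2 = K * m2" unfolding t_def using K mp by (simp add: mult_nonneg_nonneg)
      have t3: "t^3 = K * m2 * t" by (simp add: power3_eq_cube tt[unfolded power2_eq_square])
      have "(3 * t^2 * m2 - K * m2^2) / (2 * t^3) = m2 / t"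
        using t0 K mp tt[unfolded power2_eq_square] by (simp add: tt t3 field_simps power2_eq_square)
      also have "\<dots> = sqrt m2 / sqrt K"
      proof -
        have q: "m2 = sqrt m2 * sqrt m2" using m2nn by simp
        show ?thesis using K mp unfolding t_def real_sqrt_mult
          by (subst (1) q) (simp add: field_simps)
      qed
      finally show ?thesis .
    qed
    ultimately show ?thesis by linarith
  qed
qed

end

lemma sum4: fixes a b :: "nat \<Rightarrow> real" shows "(\<Sum>i\<le>4. real (4 choose i) * (a i * b (4 - i))) = a 0 * b 4 + 4 * (a 1 * b 3) + 6 * (a 2 * b 2) + 4 * (a 3 * b 1) + a 4 * b 0"
proof -
  have e: "{..4::nat} = {0,1,2,3,4}" by auto
  have c: "(4::nat) choose 1 = 4" "(4::nat) choose 2 = 6" "(4::nat) choose 3 = 4"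
    by (simp_all add: numeral_eq_Suc)
  show ?thesis unfolding e by (simp add: c)
qed
lemma sum2: fixes a b :: "nat \<Rightarrow> real" shows "(\<Sum>i\<le>2. real (2 choose i) * (a i * b (2 - i))) = a 0 * b 2 + 2 * (a 1 * b 1) + a 2 * b 0"
proof -
  have e: "{..2::nat} = {0,1,2}" by auto
  show ?thesis unfolding e by simp
qed

context prob_space begin

lemma indep_pow:
  fixes A B :: "'a \<Rightarrow> real"
  assumes ind: "indep_var borel A borel B"
    and iA: "integrable M (\<lambda>\<omega>. A \<omega> ^ p)" and iB: "integrable M (\<lambda>\<omega>. B \<omega> ^ q)"
  shows "integrable M (\<lambda>\<omega>. A \<omega> ^ p * B \<omega> ^ q)"
    "expectation (\<lambda>\<omega>. A \<omega> ^ p * B \<omega> ^ q) = expectation (\<lambda>\<omega>. A \<omega> ^ p) * expectation (\<lambda>\<omega>. B \<omega> ^ q)"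
proof -
  have "indep_var borel ((\<lambda>x. x ^ p) \<circ> A) borel ((\<lambda>x. x ^ q) \<circ> B)"
    by (rule indep_var_compose[OF ind]) auto
  then have i: "indep_var borel (\<lambda>\<omega>. A \<omega> ^ p) borel (\<lambda>\<omega>. B \<omega> ^ q)" by (simp add: comp_def)
  show "integrable M (\<lambda>\<omega>. A \<omega> ^ p * B \<omega> ^ q)" by (rule indep_var_integrable[OF i iA iB])
  show "expectation (\<lambda>\<omega>. A \<omega> ^ p * B \<omega> ^ q) = expectation (\<lambda>\<omega>. A \<omega> ^ p) * expectation (\<lambda>\<omega>. B \<omega> ^ q)"
    by (rule indep_var_lebesgue_integral[OF i iA iB])
qed

lemma fourth_moment_sum:
  fixes Y :: "'j \<Rightarrow> 'a \<Rightarrow> real"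
  assumes fin: "finite J"
    and ind: "\<And>j J'. j \<in> J \<Longrightarrow> J' \<subseteq> J \<Longrightarrow> j \<notin> J' \<Longrightarrow> indep_var borel (\<lambda>\<omega>. \<Sum>l\<in>J'. Y l \<omega>) borel (Y j)"
    and int: "\<And>j k. j \<in> J \<Longrightarrow> integrable M (\<lambda>\<omega>. Y j \<omega> ^ k)"
    and mean0: "\<And>j. j \<in> J \<Longrightarrow> expectation (Y j) = 0"
    and K4: "\<And>j. j \<in> J \<Longrightarrow> expectation (\<lambda>\<omega>. Y j \<omega>^4) \<le> K * (expectation (\<lambda>\<omega>. Y j \<omega>^2))^2"
    and K: "3 \<le> K"
  shows "(\<forall>k\<le>4. integrable M (\<lambda>\<omega>. (\<Sum>j\<in>J. Y j \<omega>) ^ k)) \<and>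
         expectation (\<lambda>\<omega>. \<Sum>j\<in>J. Y j \<omega>) = 0 \<and>
         expectation (\<lambda>\<omega>. (\<Sum>j\<in>J. Y j \<omega>) ^ 2) = (\<Sum>j\<in>J. expectation (\<lambda>\<omega>. Y j \<omega>^2)) \<and>
         expectation (\<lambda>\<omega>. (\<Sum>j\<in>J. Y j \<omega>) ^ 4) \<le> K * (\<Sum>j\<in>J. expectation (\<lambda>\<omega>. Y j \<omega>^2))^2"
  using fin subset_refl[of J]
proof (induction J rule: finite_subset_induct')
  case empty
  then show ?case by simp
next
  case (insert a F)
  define A where "A = (\<lambda>\<omega>. \<Sum>j\<in>F. Y j \<omega>)"
  define B where "B = Y a"
  define s where "s = (\<Sum>j\<in>F. expectation (\<lambda>\<omega>. Y j \<omega>^2))"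
  define v where "v = expectation (\<lambda>\<omega>. B \<omega>^2)"
  have IH: "\<forall>k\<le>4. integrable M (\<lambda>\<omega>. A \<omega> ^ k)" "expectation A = 0"
     "expectation (\<lambda>\<omega>. A \<omega> ^ 2) = s" "expectation (\<lambda>\<omega>. A \<omega> ^ 4) \<le> K * s^2"
    using insert.IH by (simp_all add: A_def s_def)
  have indAB: "indep_var borel A borel B"
    unfolding A_def B_def using insert by (intro ind) auto
  have iB: "\<And>q. integrable M (\<lambda>\<omega>. B \<omega> ^ q)" using insert int by (simp add: B_def)
  have pq: "integrable M (\<lambda>\<omega>. A \<omega> ^ p * B \<omega> ^ q)"
     "expectation (\<lambda>\<omega>. A \<omega> ^ p * B \<omega> ^ q) = expectation (\<lambda>\<omega>. A \<omega> ^ p) * expectation (\<lambda>\<omega>. B \<omega> ^ q)"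
    if "p \<le> 4" for p q
    using indep_pow[OF indAB _ iB, of p q] IH(1) that by auto
  have EB: "expectation B = 0" using insert mean0 by (simp add: B_def)
  have sumeq: "(\<Sum>j\<in>insert a F. Y j \<omega>) = A \<omega> + B \<omega>" for \<omega>
    using insert by (simp add: A_def B_def add.commute)
  have binom: "(A \<omega> + B \<omega>)^k = (\<Sum>i\<le>k. of_nat (k choose i) * (A \<omega>^i * B \<omega>^(k-i)))" for \<omega> k
    by (simp add: binomial_ring mult.assoc)
  have intk: "integrable M (\<lambda>\<omega>. (A \<omega> + B \<omega>)^k)" if "k \<le> 4" for k
    unfolding binom using that by (intro Bochner_Integration.integrable_sum integrable_mult_right pq) auto
  have Ek: "expectation (\<lambda>\<omega>. (A \<omega> + B \<omega>)^k) =
      (\<Sum>i\<le>k. of_nat (k choose i) * (expectation (\<lambda>\<omega>. A \<omega> ^ i) * expectation (\<lambda>\<omega>. B \<omega> ^ (k-i))))"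
    if "k \<le> 4" for k
    unfolding binom using that
    by (subst Bochner_Integration.integral_sum) (auto intro!: integrable_mult_right pq sum.cong simp: pq(2))
  have E0: "expectation (\<lambda>\<omega>. c) = c" for c :: real by (simp add: prob_space)
  have E2: "expectation (\<lambda>\<omega>. (A \<omega> + B \<omega>)^2) = s + v"
  proof -
    have "expectation (\<lambda>\<omega>. (A \<omega> + B \<omega>)^2) = expectation (\<lambda>\<omega>. A \<omega> ^ 0) * expectation (\<lambda>\<omega>. B \<omega> ^ 2)
       + 2 * (expectation (\<lambda>\<omega>. A \<omega> ^ 1) * expectation (\<lambda>\<omega>. B \<omega> ^ 1))
       + expectation (\<lambda>\<omega>. A \<omega> ^ 2) * expectation (\<lambda>\<omega>. B \<omega> ^ 0)"
      by (subst Ek) (simp, rule sum2)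
    also have "\<dots> = s + v" using IH(2,3) EB by (simp add: v_def prob_space)
    finally show ?thesis .
  qed
  have E4: "expectation (\<lambda>\<omega>. (A \<omega> + B \<omega>)^4) = expectation (\<lambda>\<omega>. A \<omega> ^ 4) + 6 * s * v + expectation (\<lambda>\<omega>. B \<omega> ^ 4)"
  proof -
    have "expectation (\<lambda>\<omega>. (A \<omega> + B \<omega>)^4) = expectation (\<lambda>\<omega>. A \<omega> ^ 0) * expectation (\<lambda>\<omega>. B \<omega> ^ 4)
       + 4 * (expectation (\<lambda>\<omega>. A \<omega> ^ 1) * expectation (\<lambda>\<omega>. B \<omega> ^ 3))
       + 6 * (expectation (\<lambda>\<omega>. A \<omega> ^ 2) * expectation (\<lambda>\<omega>. B \<omega> ^ 2))
       + 4 * (expectation (\<lambda>\<omega>. A \<omega> ^ 3) * expectation (\<lambda>\<omega>. B \<omega> ^ 1))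
       + expectation (\<lambda>\<omega>. A \<omega> ^ 4) * expectation (\<lambda>\<omega>. B \<omega> ^ 0)"
      by (subst Ek) (simp, rule sum4)
    also have "\<dots> = expectation (\<lambda>\<omega>. A \<omega> ^ 4) + 6 * s * v + expectation (\<lambda>\<omega>. B \<omega> ^ 4)"
      using IH(2,3) EB by (simp add: v_def prob_space)
    finally show ?thesis .
  qed
  have v0: "v \<ge> 0" unfolding v_def by (simp add: integral_nonneg_AE)
  have s0: "s \<ge> 0" unfolding s_def by (intro sum_nonneg) (simp add: integral_nonneg_AE)
  have KB: "expectation (\<lambda>\<omega>. B \<omega> ^ 4) \<le> K * v^2" using K4 insert by (simp add: B_def v_def)
  have "expectation (\<lambda>\<omega>. (A \<omega> + B \<omega>)^4) \<le> K * s^2 + 6 * s * v + K * v^2"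
    using E4 IH(4) KB by linarith
  also have "\<dots> \<le> K * (s + v)^2"
  proof -
    have "3 * (s * v) \<le> K * (s * v)" using K s0 v0 by (intro mult_right_mono) auto
    then show ?thesis by (simp add: power2_eq_square algebra_simps)
  qed
  finally have F4: "expectation (\<lambda>\<omega>. (A \<omega> + B \<omega>)^4) \<le> K * (s + v)^2" .
  have F1: "expectation (\<lambda>\<omega>. A \<omega> + B \<omega>) = 0"
  proof -
    have "integrable M A" using IH(1)[rule_format, of 1] by simp
    then show ?thesis using iB[of 1] EB IH(2) by simp
  qed
  have "(\<Sum>j\<in>insert a F. expectation (\<lambda>\<omega>. Y j \<omega>^2)) = s + v"
    using insert by (simp add: s_def v_def B_def)
  moreover have S: "(\<lambda>\<omega>. \<Sum>j\<in>insert a F. Y j \<omega>) = (\<lambda>\<omega>. A \<omega> + B \<omega>)"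
    by (rule ext) (rule sumeq)
  moreover have "\<forall>k\<le>4. integrable M (\<lambda>\<omega>. (A \<omega> + B \<omega>)^k)" using intk by blast
  ultimately show ?case using F1 E2 F4 by (simp only: sumeq)
qed

end

definition Av :: "nat \<Rightarrow> (nat \<Rightarrow> nat \<Rightarrow> real) \<Rightarrow> (nat \<Rightarrow> real) \<Rightarrow> nat \<Rightarrow> real" where
  "Av n A x i = (\<Sum>j<n. A i j * x j)"

definition fro :: "nat \<Rightarrow> nat \<Rightarrow> (nat \<Rightarrow> nat \<Rightarrow> real) \<Rightarrow> real" where
  "fro m n A = L2_set (\<lambda>i. L2_set (A i) {..<n}) {..<m}"

lemma L2_abs: "L2_set (\<lambda>i. \<bar>g i\<bar>) K = L2_set g K"
  by (simp add: L2_set_def)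

lemma sqrt_sum_L2: "sqrt (\<Sum>i<m. (g i)\<^sup>2) = L2_set g {..<m}"
  by (simp add: L2_set_def)

lemma ball_iff: "(\<Sum>j<n. (x j)\<^sup>2) \<le> 1 \<longleftrightarrow> L2_set x {..<n} \<le> 1"
  by (simp add: L2_set_def)

lemma Av_bound: "\<bar>Av n A x i\<bar> \<le> L2_set (A i) {..<n} * L2_set x {..<n}"
proof -
  have "\<bar>Av n A x i\<bar> \<le> (\<Sum>j<n. \<bar>A i j\<bar> * \<bar>x j\<bar>)"
    unfolding Av_def by (rule order_trans[OF sum_abs]) (simp add: abs_mult)
  also have "\<dots> \<le> L2_set (A i) {..<n} * L2_set x {..<n}" by (rule L2_set_mult_ineq)
  finally show ?thesis .
qed

lemma f_bound: "L2_set (Av n A x) {..<m} \<le> fro m n A * L2_set x {..<n}"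
proof -
  have "L2_set (Av n A x) {..<m} = L2_set (\<lambda>i. \<bar>Av n A x i\<bar>) {..<m}" by (simp add: L2_abs)
  also have "\<dots> \<le> L2_set (\<lambda>i. L2_set (A i) {..<n} * L2_set x {..<n}) {..<m}"
    by (rule L2_set_mono) (auto intro: Av_bound)
  also have "\<dots> = fro m n A * L2_set x {..<n}"
    unfolding fro_def by (rule L2_set_left_distrib[symmetric]) simp
  finally show ?thesis .
qed

lemma f_add: "L2_set (Av n A (\<lambda>j. x j + y j)) {..<m} \<le> L2_set (Av n A x) {..<m} + L2_set (Av n A y) {..<m}"
proof -
  have "Av n A (\<lambda>j. x j + y j) = (\<lambda>i. Av n A x i + Av n A y i)"
    by (auto simp: Av_def algebra_simps sum.distrib)
  then show ?thesis by (simp add: L2_set_triangle_ineq)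
qed

lemma spec_norm_alt: "spec_norm m n A = (SUP x \<in> {x. L2_set x {..<n} \<le> 1}. L2_set (Av n A x) {..<m})"
  unfolding spec_norm_def ball_iff sqrt_sum_L2 Av_def ..

lemma fro_nonneg: "fro m n A \<ge> 0" by (simp add: fro_def)

lemma bdd_f: "bdd_above ((\<lambda>x. L2_set (Av n A x) {..<m}) ` {x. L2_set x {..<n} \<le> 1})"
proof (rule bdd_aboveI2)
  fix x assume "x \<in> {x. L2_set x {..<n} \<le> 1}"
  then have "L2_set x {..<n} \<le> 1" by simp
  then have "fro m n A * L2_set x {..<n} \<le> fro m n A" using fro_nonneg
    by (simp add: mult_left_le)
  then show "L2_set (Av n A x) {..<m} \<le> fro m n A" using f_bound order_trans by blast
qed

lemma spec_ge: "L2_set x {..<n} \<le> 1 \<Longrightarrow> L2_set (Av n A x) {..<m} \<le> spec_norm m n A"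
  unfolding spec_norm_alt by (rule cSUP_upper[OF _ bdd_f]) simp

lemma spec_le_fro: "spec_norm m n A \<le> fro m n A"
  unfolding spec_norm_alt
proof (rule cSUP_least)
  show "{x. L2_set x {..<n} \<le> 1} \<noteq> {}" by (auto intro!: exI[of _ "\<lambda>_. 0"] simp: L2_set_def)
  fix x assume "x \<in> {x. L2_set x {..<n} \<le> 1}"
  then have "L2_set x {..<n} \<le> 1" by simp
  then have "fro m n A * L2_set x {..<n} \<le> fro m n A" using fro_nonneg
    by (simp add: mult_left_le)
  then show "L2_set (Av n A x) {..<m} \<le> fro m n A" using f_bound order_trans by blast
qed

lemma spec_nonneg: "spec_norm m n A \<ge> 0"
  using spec_ge[of "\<lambda>_. 0" n A m] by (simp add: L2_set_def Av_def)

lemma spec_bil: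
  assumes "L2_set u {..<m} \<le> 1" "L2_set v {..<n} \<le> 1"
  shows "(\<Sum>i<m. u i * (\<Sum>j<n. A i j * v j)) \<le> spec_norm m n A"
proof -
  have "(\<Sum>i<m. u i * (\<Sum>j<n. A i j * v j)) \<le> (\<Sum>i<m. \<bar>u i\<bar> * \<bar>Av n A v i\<bar>)"
    unfolding Av_def by (rule sum_mono) (metis abs_ge_self abs_mult)
  also have "\<dots> \<le> L2_set u {..<m} * L2_set (Av n A v) {..<m}" by (rule L2_set_mult_ineq)
  also have "\<dots> \<le> 1 * L2_set (Av n A v) {..<m}" using assms(1) by (intro mult_right_mono) auto
  also have "\<dots> \<le> spec_norm m n A" using spec_ge[OF assms(2)] by simp
  finally show ?thesis .
qed

definition Dn :: "nat \<Rightarrow> (nat \<Rightarrow> real) set" where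
  "Dn n = {x \<in> PiE {..<n} (\<lambda>_. \<rat>). L2_set x {..<n} \<le> 1}"

lemma countable_Dn: "countable (Dn n)"
proof -
  have "countable (PiE {..<n} (\<lambda>_. \<rat>::real set))"
    by (rule countable_PiE) (auto simp: countable_rat)
  then show ?thesis unfolding Dn_def by (rule countable_subset[rotated]) auto
qed

lemma Dn_ne: "restrict (\<lambda>_. 0) {..<n} \<in> Dn n"
  unfolding Dn_def by (auto simp: L2_set_def)

lemma bdd_D: "bdd_above ((\<lambda>x. L2_set (Av n A x) {..<m}) ` Dn n)"
  by (rule bdd_above_mono[OF bdd_f]) (auto simp: Dn_def)

lemma density:
  assumes x: "L2_set x {..<n} \<le> 1"
  shows "L2_set (Av n A x) {..<m} \<le> (SUP y\<in>Dn n. L2_set (Av n A y) {..<m})"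
proof (rule field_le_epsilon)
  fix e :: real assume e: "0 < e"
  define F where "F = fro m n A"
  have F0: "F \<ge> 0" by (simp add: F_def fro_nonneg)
  define \<theta> where "\<theta> = min (1/2) (e / (2*F+2))"
  have th0: "\<theta> > 0" using e F0 by (simp add: \<theta>_def)
  have th1: "\<theta> \<le> 1/2" unfolding \<theta>_def by (rule min.cobounded1)
  have th2: "\<theta> \<le> e / (2*F+2)" unfolding \<theta>_def by (rule min.cobounded2)
  define c where "c = 1 - \<theta>"
  have c0: "c \<ge> 0" using th1 by (simp add: c_def)
  define \<eta> where "\<eta> = \<theta> / (sqrt n + 1)"
  have eta0: "\<eta> > 0" using th0 by (simp add: \<eta>_def add_nonneg_pos)
  have "\<forall>j. \<exists>r. r \<in> \<rat> \<and> \<bar>r - c * x j\<bar> < \<eta>"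
  proof
    fix j
    obtain r where "r \<in> \<rat>" "c * x j - \<eta> < r" "r < c * x j + \<eta>"
      using Rats_dense_in_real[of "c * x j - \<eta>" "c * x j + \<eta>"] eta0 by auto
    then show "\<exists>r. r \<in> \<rat> \<and> \<bar>r - c * x j\<bar> < \<eta>" by (intro exI[of _ r]) auto
  qed
  then obtain r where r: "\<And>j. r j \<in> \<rat>" "\<And>j. \<bar>r j - c * x j\<bar> < \<eta>" by metis
  define y where "y = restrict r {..<n}"
  have yPi: "y \<in> PiE {..<n} (\<lambda>_. \<rat>)" using r(1) by (simp add: y_def)
  have Nyc: "L2_set (\<lambda>j. y j - c * x j) {..<n} \<le> \<theta>"
  proof -
    have "L2_set (\<lambda>j. y j - c * x j) {..<n} = L2_set (\<lambda>j. \<bar>y j - c * x j\<bar>) {..<n}" by (simp add: L2_abs)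
    also have "\<dots> \<le> L2_set (\<lambda>_. \<eta>) {..<n}"
      by (rule L2_set_mono) (use r(2) in \<open>auto simp: y_def less_imp_le\<close>)
    also have "\<dots> = sqrt n * \<eta>" using eta0 by (simp add: L2_set_constant)
    also have "\<dots> \<le> \<theta>"
    proof -
      have q: "sqrt n * \<eta> = \<theta> * (sqrt n / (sqrt n + 1))" unfolding \<eta>_def by simp
      have "sqrt n / (sqrt n + 1) \<le> 1" by (simp add: divide_le_eq_1 add_nonneg_pos)
      then show ?thesis unfolding q using th0 by (intro mult_left_le) auto
    qed
    finally show ?thesis .
  qed
  have Ncx: "L2_set (\<lambda>j. c * x j) {..<n} \<le> c"
  proof -
    have "L2_set (\<lambda>j. c * x j) {..<n} = c * L2_set x {..<n}" by (rule L2_set_right_distrib[OF c0, symmetric])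
    also have "\<dots> \<le> c" using x c0 by (rule mult_left_le)
    finally show ?thesis .
  qed
  have Ny: "L2_set y {..<n} \<le> 1"
  proof -
    have "L2_set y {..<n} = L2_set (\<lambda>j. c * x j + (y j - c * x j)) {..<n}" by simp
    also have "\<dots> \<le> L2_set (\<lambda>j. c * x j) {..<n} + L2_set (\<lambda>j. y j - c * x j) {..<n}"
      by (rule L2_set_triangle_ineq)
    also have "\<dots> \<le> 1" using Ncx Nyc by (simp add: c_def)
    finally show ?thesis .
  qed
  then have yD: "y \<in> Dn n" using yPi by (simp add: Dn_def)
  have Nxy: "L2_set (\<lambda>j. x j - y j) {..<n} \<le> 2 * \<theta>"
  proof -
    have "L2_set (\<lambda>j. x j - y j) {..<n} = L2_set (\<lambda>j. (1 - c) * x j + - (y j - c * x j)) {..<n}"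
      by (simp add: algebra_simps)
    also have "\<dots> \<le> L2_set (\<lambda>j. (1 - c) * x j) {..<n} + L2_set (\<lambda>j. - (y j - c * x j)) {..<n}"
      by (rule L2_set_triangle_ineq)
    also have "L2_set (\<lambda>j. - (y j - c * x j)) {..<n} = L2_set (\<lambda>j. y j - c * x j) {..<n}"
      unfolding L2_set_def by (simp only: power2_minus)
    also have "L2_set (\<lambda>j. (1 - c) * x j) {..<n} = (1 - c) * L2_set x {..<n}"
      using th0 by (subst L2_set_right_distrib) (auto simp: c_def)
    also have "(1 - c) * L2_set x {..<n} \<le> \<theta>" using x th0 unfolding c_def by (simp add: mult_left_le less_imp_le)
    finally show ?thesis using Nyc by linarith
  qed
  have "L2_set (Av n A x) {..<m} = L2_set (Av n A (\<lambda>j. y j + (x j - y j))) {..<m}" by simp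
  also have "\<dots> \<le> L2_set (Av n A y) {..<m} + L2_set (Av n A (\<lambda>j. x j - y j)) {..<m}"
    by (rule f_add)
  also have "L2_set (Av n A (\<lambda>j. x j - y j)) {..<m} \<le> e"
  proof -
    have "L2_set (Av n A (\<lambda>j. x j - y j)) {..<m} \<le> F * L2_set (\<lambda>j. x j - y j) {..<n}"
      unfolding F_def by (rule f_bound)
    also have "\<dots> \<le> F * (2 * \<theta>)" using Nxy F0 by (intro mult_left_mono)
    also have "\<dots> \<le> F * (2 * (e / (2*F+2)))" using th2 F0 by (intro mult_left_mono) auto
    also have "\<dots> \<le> e" using F0 e by (simp add: field_simps)
    finally show ?thesis .
  qed
  also have "L2_set (Av n A y) {..<m} \<le> (SUP y\<in>Dn n. L2_set (Av n A y) {..<m})"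
    by (rule cSUP_upper[OF yD bdd_D])
  finally show "L2_set (Av n A x) {..<m} \<le> (SUP y\<in>Dn n. L2_set (Av n A y) {..<m}) + e" by simp
qed

lemma spec_norm_D: "spec_norm m n A = (SUP x\<in>Dn n. L2_set (Av n A x) {..<m})"
proof (rule antisym)
  show "spec_norm m n A \<le> (SUP x\<in>Dn n. L2_set (Av n A x) {..<m})"
    unfolding spec_norm_alt
  proof (rule cSUP_least)
    show "{x. L2_set x {..<n} \<le> 1} \<noteq> {}" by (auto intro!: exI[of _ "\<lambda>_. 0"] simp: L2_set_def)
    fix x assume "x \<in> {x. L2_set x {..<n} \<le> 1}"
    then show "L2_set (Av n A x) {..<m} \<le> (SUP x\<in>Dn n. L2_set (Av n A x) {..<m})"
      by (intro density) simp
  qed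
  show "(SUP x\<in>Dn n. L2_set (Av n A x) {..<m}) \<le> spec_norm m n A"
  proof (rule cSUP_least)
    show "Dn n \<noteq> {}" using Dn_ne by blast
    fix x assume "x \<in> Dn n"
    then show "L2_set (Av n A x) {..<m} \<le> spec_norm m n A" by (intro spec_ge) (simp add: Dn_def)
  qed
qed

definition sg :: "real \<Rightarrow> real" where "sg x = (if x \<ge> 0 then 1 else -1)"

lemma sg_sq[simp]: "sg x * sg x = 1" by (simp add: sg_def)
lemma sg_mult_self: "sg x * x = \<bar>x\<bar>" by (simp add: sg_def)
lemma sg_meas[measurable]: "sg \<in> borel_measurable borel"
  unfolding sg_def by measurable

definition Wm :: "nat \<Rightarrow> (nat \<Rightarrow> real) \<Rightarrow> (nat \<times> nat \<Rightarrow> real) \<Rightarrow> nat \<Rightarrow> nat \<Rightarrow> real" where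
  "Wm p2 \<sigma> \<omega> i k = (\<Sum>j<p2. (\<sigma> j)^2 * (\<omega> (i,j) * \<omega> (k,j))) - (if i = k then (\<Sum>j<p2. (\<sigma> j)^2) else 0)"

abbreviation "GA (p1::nat) (p2::nat) \<equiv> PiM ({..<p1} \<times> {..<p2}) (\<lambda>_. G)"

interpretation GAp: prob_space "GA p1 p2" for p1 p2 by (rule MM_prob)

lemma Wm_meas:
  assumes "i < p1" "k < p1"
  shows "(\<lambda>\<omega>. Wm p2 \<sigma> \<omega> i k) \<in> borel_measurable (GA p1 p2)"
  unfolding Wm_def using assms
  by (intro borel_measurable_diff borel_measurable_sum borel_measurable_times borel_measurable_const)
     (auto intro!: comp_meas)


lemma spec_norm_cong:
  assumes "\<And>i j. i < m \<Longrightarrow> j < n \<Longrightarrow> A i j = B i j"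
  shows "spec_norm m n A = spec_norm m n B"
  unfolding spec_norm_def using assms by (intro SUP_cong refl arg_cong[where f=sqrt] sum.cong) auto

lemma S_meas:
  "(\<lambda>\<omega>. spec_norm p1 p1 (Wm p2 \<sigma> \<omega>)) \<in> borel_measurable (GA p1 p2)"
proof -
  have m: "(\<lambda>\<omega>. L2_set (Av p1 (Wm p2 \<sigma> \<omega>) x) {..<p1}) \<in> borel_measurable (GA p1 p2)" for x
    unfolding L2_set_def Av_def
    by (rule measurable_compose[OF _ borel_measurable_sqrt])
       (intro borel_measurable_sum borel_measurable_power borel_measurable_times borel_measurable_const Wm_meas; simp)
  show ?thesis unfolding spec_norm_D
    by (rule borel_measurable_cSUP[OF countable_Dn m bdd_D])
qed

definition Sbound :: "nat \<Rightarrow> nat \<Rightarrow> (nat \<Rightarrow> real) \<Rightarrow> (nat \<times> nat \<Rightarrow> real) \<Rightarrow> real" where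
  "Sbound p1 p2 \<sigma> \<omega> = (\<Sum>i<p1. \<Sum>k<p1. (\<Sum>j<p2. (\<sigma> j)^2 * ((\<omega> (i,j))^2 + (\<omega> (k,j))^2)) + (\<Sum>j<p2. (\<sigma> j)^2))"

lemma abs_Wm: "\<bar>Wm p2 \<sigma> \<omega> i k\<bar> \<le> (\<Sum>j<p2. (\<sigma> j)^2 * ((\<omega> (i,j))^2 + (\<omega> (k,j))^2)) + (\<Sum>j<p2. (\<sigma> j)^2)"
proof -
  have "\<bar>Wm p2 \<sigma> \<omega> i k\<bar> \<le> \<bar>\<Sum>j<p2. (\<sigma> j)^2 * (\<omega> (i,j) * \<omega> (k,j))\<bar> + \<bar>if i = k then (\<Sum>j<p2. (\<sigma> j)^2) else 0\<bar>"
    unfolding Wm_def by (rule abs_triangle_ineq4)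
  also have "\<bar>if i = k then (\<Sum>j<p2. (\<sigma> j)^2) else 0\<bar> \<le> (\<Sum>j<p2. (\<sigma> j)^2)"
    by (simp add: sum_nonneg)
  also have "\<bar>\<Sum>j<p2. (\<sigma> j)^2 * (\<omega> (i,j) * \<omega> (k,j))\<bar> \<le> (\<Sum>j<p2. \<bar>(\<sigma> j)^2 * (\<omega> (i,j) * \<omega> (k,j))\<bar>)"
    by (rule sum_abs)
  also have "\<dots> \<le> (\<Sum>j<p2. (\<sigma> j)^2 * ((\<omega> (i,j))^2 + (\<omega> (k,j))^2))"
  proof (rule sum_mono)
    fix j
    have "\<bar>\<omega> (i,j) * \<omega> (k,j)\<bar> \<le> (\<omega> (i,j))^2 + (\<omega> (k,j))^2"
    proof -
      have "2 * (\<bar>\<omega> (i,j)\<bar> * \<bar>\<omega> (k,j)\<bar>) \<le> (\<omega> (i,j))^2 + (\<omega> (k,j))^2"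
        using sum_squares_bound[of "\<bar>\<omega> (i,j)\<bar>" "\<bar>\<omega> (k,j)\<bar>"] by (simp add: mult.assoc)
      moreover have "\<bar>\<omega> (i,j)\<bar> * \<bar>\<omega> (k,j)\<bar> \<ge> 0" by simp
      ultimately show ?thesis unfolding abs_mult by linarith
    qed
    then show "\<bar>(\<sigma> j)^2 * (\<omega> (i,j) * \<omega> (k,j))\<bar> \<le> (\<sigma> j)^2 * ((\<omega> (i,j))^2 + (\<omega> (k,j))^2)"
      by (simp add: abs_mult mult_left_mono)
  qed
  finally show ?thesis by simp
qed

lemma fro_le_sum: "fro m n A \<le> (\<Sum>i<m. \<Sum>k<n. \<bar>A i k\<bar>)"
proof -
  have "fro m n A \<le> (\<Sum>i<m. L2_set (A i) {..<n})" unfolding fro_def by (rule L2_set_le_sum) simp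
  also have "\<dots> \<le> (\<Sum>i<m. \<Sum>k<n. \<bar>A i k\<bar>)" by (intro sum_mono L2_set_le_sum_abs)
  finally show ?thesis .
qed

lemma S_le_Sbound: "spec_norm p1 p1 (Wm p2 \<sigma> \<omega>) \<le> Sbound p1 p2 \<sigma> \<omega>"
proof -
  have "spec_norm p1 p1 (Wm p2 \<sigma> \<omega>) \<le> (\<Sum>i<p1. \<Sum>k<p1. \<bar>Wm p2 \<sigma> \<omega> i k\<bar>)"
    using spec_le_fro fro_le_sum order_trans by blast
  also have "\<dots> \<le> Sbound p1 p2 \<sigma> \<omega>" unfolding Sbound_def by (intro sum_mono abs_Wm)
  finally show ?thesis .
qed

lemma finI: "finite ({..<p1::nat} \<times> {..<p2::nat})" by simp

lemma int_sq: "i < p1 \<Longrightarrow> j < p2 \<Longrightarrow> integrable (GA p1 p2) (\<lambda>\<omega>. (\<omega> (i,j))^2)"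
  using E1(1)[OF finI, where a="(i,j)" and f="\<lambda>x. x^2"] by (simp add: G_int_pow)

lemma Sbound_int: "integrable (GA p1 p2) (Sbound p1 p2 \<sigma>)"
  unfolding Sbound_def
  by (intro Bochner_Integration.integrable_sum Bochner_Integration.integrable_add integrable_mult_right int_sq GAp.integrable_const) auto

lemma S_int: "integrable (GA p1 p2) (\<lambda>\<omega>. spec_norm p1 p1 (Wm p2 \<sigma> \<omega>))"
proof (rule Bochner_Integration.integrable_bound[OF Sbound_int S_meas])
  show "AE x in GA p1 p2. norm (spec_norm p1 p1 (Wm p2 \<sigma> x)) \<le> norm (Sbound p1 p2 \<sigma> x)"
  proof (rule AE_I2)
    fix x
    have "0 \<le> spec_norm p1 p1 (Wm p2 \<sigma> x)" by (rule spec_nonneg)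
    moreover have "spec_norm p1 p1 (Wm p2 \<sigma> x) \<le> Sbound p1 p2 \<sigma> x" by (rule S_le_Sbound)
    ultimately show "norm (spec_norm p1 p1 (Wm p2 \<sigma> x)) \<le> norm (Sbound p1 p2 \<sigma> x)" by simp
  qed
qed

lemma sg_meas_G: "sg \<in> borel_measurable G"
  by (subst measurable_cong_sets[OF sets_G refl]) (rule sg_meas)

lemma G_int_sg: "integrable G sg"
proof (rule Bochner_Integration.integrable_bound[OF G.integrable_const[of "1::real"] sg_meas_G])
  show "AE x in G. norm (sg x) \<le> norm (1::real)" by (rule AE_I2) (simp add: sg_def)
qed

lemma G_int_id: "integrable G (\<lambda>x. x)" using G_int_pow[of 1] by simp

lemma comp_GA: "i < p1 \<Longrightarrow> j < p2 \<Longrightarrow> (\<lambda>\<omega>. \<omega> (i,j)) \<in> borel_measurable (GA p1 p2)"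
  by (rule comp_meas) auto

lemma int_bdd:
  assumes a: "fst a < p1" "snd a < p2" and b: "fst b < p1" "snd b < p2"
    and phi: "\<phi> \<in> borel_measurable (GA p1 p2)" "\<And>\<omega>. \<bar>\<phi> \<omega>\<bar> \<le> 1"
  shows "integrable (GA p1 p2) (\<lambda>\<omega>. \<phi> \<omega> * (\<omega> a * \<omega> b))"
proof (rule Bochner_Integration.integrable_bound[of _ "\<lambda>\<omega>. (\<omega> a)^2 + (\<omega> b)^2"])
  have ia: "integrable (GA p1 p2) (\<lambda>\<omega>. (\<omega> a)^2)"
    using int_sq[OF a] by (simp only: prod.collapse)
  have ib: "integrable (GA p1 p2) (\<lambda>\<omega>. (\<omega> b)^2)"
    using int_sq[OF b] by (simp only: prod.collapse)
  show "integrable (GA p1 p2) (\<lambda>\<omega>. (\<omega> a)^2 + (\<omega> b)^2)"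
    by (rule Bochner_Integration.integrable_add[OF ia ib])
  have ma: "(\<lambda>\<omega>. \<omega> a) \<in> borel_measurable (GA p1 p2)"
    using comp_GA[OF a] by (simp only: prod.collapse)
  have mb: "(\<lambda>\<omega>. \<omega> b) \<in> borel_measurable (GA p1 p2)"
    using comp_GA[OF b] by (simp only: prod.collapse)
  show "(\<lambda>\<omega>. \<phi> \<omega> * (\<omega> a * \<omega> b)) \<in> borel_measurable (GA p1 p2)"
    by (intro borel_measurable_times phi(1) ma mb)
  show "AE x in GA p1 p2. norm (\<phi> x * (x a * x b)) \<le> norm ((x a)^2 + (x b)^2)"
  proof (rule AE_I2)
    fix x :: "nat \<times> nat \<Rightarrow> real"
    have "2 * (\<bar>x a\<bar> * \<bar>x b\<bar>) \<le> (x a)^2 + (x b)^2"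
      using sum_squares_bound[of "\<bar>x a\<bar>" "\<bar>x b\<bar>"] by (simp add: mult.assoc)
    moreover have "\<bar>x a\<bar> * \<bar>x b\<bar> \<ge> 0" by simp
    moreover have "\<bar>\<phi> x\<bar> * (\<bar>x a\<bar> * \<bar>x b\<bar>) \<le> 1 * (\<bar>x a\<bar> * \<bar>x b\<bar>)"
      using phi(2) by (intro mult_right_mono) auto
    moreover have "(x a)^2 + (x b)^2 \<ge> 0" by simp
    ultimately show "norm (\<phi> x * (x a * x b)) \<le> norm ((x a)^2 + (x b)^2)"
      unfolding real_norm_def abs_mult by linarith
  qed
qed

lemma EZ2:
  assumes "i < p1" "j < p2"
  shows "integral\<^sup>L (GA p1 p2) (\<lambda>\<omega>. \<omega> (i,j) * \<omega> (i,j)) = 1"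
proof -
  have "integral\<^sup>L (GA p1 p2) (\<lambda>\<omega>. (\<omega> (i,j))^2) = integral\<^sup>L G (\<lambda>x. x^2)"
    by (rule E1(2)[OF finI[of p1 p2] _ G_int_pow]) (use assms in auto)
  then show ?thesis using G_m2 by (simp add: power2_eq_square)
qed

lemma EZZ0:
  assumes "i < p1" "k < p1" "j < p2" "i \<noteq> k"
  shows "integral\<^sup>L (GA p1 p2) (\<lambda>\<omega>. \<omega> (i,j) * \<omega> (k,j)) = 0"
proof -
  have "integral\<^sup>L (GA p1 p2) (\<lambda>\<omega>. \<omega> (i,j) * \<omega> (k,j)) = integral\<^sup>L G (\<lambda>x. x) * integral\<^sup>L G (\<lambda>x. x)"
    by (rule E2(2)[OF finI[of p1 p2] _ _ _ G_int_id G_int_id]) (use assms in auto)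
  then show ?thesis using G_m1 by simp
qed

lemma EZZt:
  assumes "i < p1" "k < p1"
  shows "integral\<^sup>L (GA p1 p2) (\<lambda>\<omega>. \<Sum>j<p2. \<sigma> j * \<omega> (i,j) * (\<sigma> j * \<omega> (k,j)))
       = (if i = k then (\<Sum>j<p2. (\<sigma> j)^2) else 0)"
proof -
  have int: "integrable (GA p1 p2) (\<lambda>\<omega>. \<sigma> j * \<omega> (i,j) * (\<sigma> j * \<omega> (k,j)))" if "j < p2" for j
  proof -
    have "integrable (GA p1 p2) (\<lambda>\<omega>. (\<sigma> j)^2 * (\<omega> (i,j) * \<omega> (k,j)))"
      using int_bdd[of "(i,j)" p1 p2 "(k,j)" "\<lambda>_. (\<sigma> j)^2"] assms that
      using int_bdd[of "(i,j)" p1 p2 "(k,j)" "\<lambda>_. 1"] by simp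
    then show ?thesis by (simp add: power2_eq_square algebra_simps)
  qed
  have "integral\<^sup>L (GA p1 p2) (\<lambda>\<omega>. \<Sum>j<p2. \<sigma> j * \<omega> (i,j) * (\<sigma> j * \<omega> (k,j)))
     = (\<Sum>j<p2. integral\<^sup>L (GA p1 p2) (\<lambda>\<omega>. \<sigma> j * \<omega> (i,j) * (\<sigma> j * \<omega> (k,j))))"
    by (rule Bochner_Integration.integral_sum) (use int in auto)
  also have "\<dots> = (\<Sum>j<p2. (\<sigma> j)^2 * integral\<^sup>L (GA p1 p2) (\<lambda>\<omega>. \<omega> (i,j) * \<omega> (k,j)))"
    by (intro sum.cong refl) (simp add: power2_eq_square algebra_simps flip: integral_mult_right_zero)
  also have "\<dots> = (if i = k then (\<Sum>j<p2. (\<sigma> j)^2) else 0)"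
    using assms by (auto simp: EZ2 EZZ0)
  finally show ?thesis .
qed

lemma sum_if_ne: "i < p \<Longrightarrow> (\<Sum>k<p. if i = k then 0 else c) = (real p - 1) * (c::real)"
proof -
  assume i: "i < p"
  have "(\<Sum>k<p. if i = k then 0 else c) = (\<Sum>k<p. c - (if i = k then c else 0))"
    by (rule sum.cong) auto
  also have "\<dots> = (\<Sum>k<p. c) - (\<Sum>k<p. if i = k then c else 0)" by (rule sum_subtractf)
  also have "\<dots> = real p * c - c" using i by simp
  finally show ?thesis by (simp add: algebra_simps)
qed

lemma G_abs_sq: "integral\<^sup>L G (\<lambda>x. \<bar>x\<bar>) * integral\<^sup>L G (\<lambda>x. \<bar>x\<bar>) = 2 / pi"
  by (simp add: G_abs)

context
  fixes p1 p2 :: nat and \<sigma> :: "nat \<Rightarrow> real" and j0 :: nat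
  assumes j0: "j0 < p2"
begin

definition hA :: "nat \<Rightarrow> nat \<Rightarrow> (nat \<times> nat \<Rightarrow> real) \<Rightarrow> real" where
  "hA i k \<omega> = sg (\<omega> (i,j0)) * sg (\<omega> (k,j0)) * Wm p2 \<sigma> \<omega> i k"

lemma sg_comp_meas: "i < p1 \<Longrightarrow> (\<lambda>\<omega>. sg (\<omega> (i,j0))) \<in> borel_measurable (GA p1 p2)"
  using j0 by (intro measurable_compose[OF comp_GA sg_meas])

lemma hA_diag:
  assumes i: "i < p1"
  shows "integrable (GA p1 p2) (hA i i)" "integral\<^sup>L (GA p1 p2) (hA i i) = 0"
proof -
  have eq: "hA i i = (\<lambda>\<omega>. (\<Sum>j<p2. (\<sigma> j)^2 * (1 * (\<omega> (i,j) * \<omega> (i,j)))) - (\<Sum>j<p2. (\<sigma> j)^2))"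
    by (rule ext) (simp add: hA_def Wm_def mult.assoc[symmetric] sg_sq)
  have it: "integrable (GA p1 p2) (\<lambda>\<omega>. (\<sigma> j)^2 * (1 * (\<omega> (i,j) * \<omega> (i,j))))" if "j < p2" for j
    using int_bdd[of "(i,j)" p1 p2 "(i,j)" "\<lambda>_. 1"] i that by (intro integrable_mult_right) auto
  show "integrable (GA p1 p2) (hA i i)" unfolding eq
    by (intro Bochner_Integration.integrable_diff Bochner_Integration.integrable_sum it GAp.integrable_const) auto
  have isum: "integrable (GA p1 p2) (\<lambda>\<omega>. \<Sum>j<p2. (\<sigma> j)^2 * (1 * (\<omega> (i,j) * \<omega> (i,j))))"
    by (intro Bochner_Integration.integrable_sum it) auto
  have "integral\<^sup>L (GA p1 p2) (hA i i) = integral\<^sup>L (GA p1 p2) (\<lambda>\<omega>. \<Sum>j<p2. (\<sigma> j)^2 * (1 * (\<omega> (i,j) * \<omega> (i,j)))) - integral\<^sup>L (GA p1 p2) (\<lambda>\<omega>. (\<Sum>j<p2. (\<sigma> j)^2))"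
    unfolding eq by (rule Bochner_Integration.integral_diff[OF isum GAp.integrable_const])
  also have "integral\<^sup>L (GA p1 p2) (\<lambda>\<omega>. \<Sum>j<p2. (\<sigma> j)^2 * (1 * (\<omega> (i,j) * \<omega> (i,j))))
      = (\<Sum>j<p2. integral\<^sup>L (GA p1 p2) (\<lambda>\<omega>. (\<sigma> j)^2 * (1 * (\<omega> (i,j) * \<omega> (i,j)))))"
    by (rule Bochner_Integration.integral_sum) (use it in auto)
  also have "\<dots> = (\<Sum>j<p2. (\<sigma> j)^2)"
    by (rule sum.cong) (use i in \<open>auto simp: EZ2\<close>)
  also have "integral\<^sup>L (GA p1 p2) (\<lambda>\<omega>. (\<Sum>j<p2. (\<sigma> j)^2)) = (\<Sum>j<p2. (\<sigma> j)^2)"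
    using GAp.prob_space[of p1 p2] by simp
  finally show "integral\<^sup>L (GA p1 p2) (hA i i) = 0" by simp
qed


lemma hA_off:
  assumes i: "i < p1" and k: "k < p1" and ik: "i \<noteq> k"
  shows "integrable (GA p1 p2) (hA i k)" "integral\<^sup>L (GA p1 p2) (hA i k) = (\<sigma> j0)^2 * (2 / pi)"
proof -
  define \<phi> where "\<phi> \<omega> = sg (\<omega> (i,j0)) * sg (\<omega> (k,j0))" for \<omega> :: "nat \<times> nat \<Rightarrow> real"
  have phim: "\<phi> \<in> borel_measurable (GA p1 p2)" unfolding \<phi>_def
    by (intro borel_measurable_times sg_comp_meas i k)
  have phib: "\<bar>\<phi> \<omega>\<bar> \<le> 1" for \<omega> by (simp add: \<phi>_def sg_def)
  have eq: "hA i k = (\<lambda>\<omega>. \<Sum>j<p2. (\<sigma> j)^2 * (\<phi> \<omega> * (\<omega> (i,j) * \<omega> (k,j))))"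
    by (rule ext) (simp add: hA_def Wm_def \<phi>_def ik sum_distrib_left algebra_simps)
  have it: "integrable (GA p1 p2) (\<lambda>\<omega>. (\<sigma> j)^2 * (\<phi> \<omega> * (\<omega> (i,j) * \<omega> (k,j))))" if "j < p2" for j
    using int_bdd[of "(i,j)" p1 p2 "(k,j)" \<phi>, OF _ _ _ _ phim phib] i k that by (intro integrable_mult_right) auto
  show "integrable (GA p1 p2) (hA i k)" unfolding eq
    by (intro Bochner_Integration.integrable_sum it) auto
  have Ej: "integral\<^sup>L (GA p1 p2) (\<lambda>\<omega>. \<phi> \<omega> * (\<omega> (i,j) * \<omega> (k,j))) = (if j = j0 then 2 / pi else 0)"
    if j: "j < p2" for j
  proof (cases "j = j0")
    case True
    have "integral\<^sup>L (GA p1 p2) (\<lambda>\<omega>. \<phi> \<omega> * (\<omega> (i,j) * \<omega> (k,j))) =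
        integral\<^sup>L (GA p1 p2) (\<lambda>\<omega>. \<bar>\<omega> (i,j0)\<bar> * \<bar>\<omega> (k,j0)\<bar>)"
      using True by (intro Bochner_Integration.integral_cong refl) (simp add: \<phi>_def sg_def)
    also have "\<dots> = integral\<^sup>L G (\<lambda>x. \<bar>x\<bar>) * integral\<^sup>L G (\<lambda>x. \<bar>x\<bar>)"
      by (rule E2(2)[OF finI[of p1 p2] _ _ _ G_int_abs G_int_abs]) (use i k j0 ik in auto)
    finally show ?thesis using True G_abs_sq by simp
  next
    case False
    have "integral\<^sup>L (GA p1 p2) (\<lambda>\<omega>. \<phi> \<omega> * (\<omega> (i,j) * \<omega> (k,j))) =
        integral\<^sup>L (GA p1 p2) (\<lambda>\<omega>. sg (\<omega> (i,j0)) * sg (\<omega> (k,j0)) * (\<lambda>x. x) (\<omega> (i,j)) * (\<lambda>x. x) (\<omega> (k,j)))"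
      by (intro Bochner_Integration.integral_cong refl) (simp add: \<phi>_def mult.assoc)
    also have "\<dots> = integral\<^sup>L G sg * integral\<^sup>L G sg * integral\<^sup>L G (\<lambda>x. x) * integral\<^sup>L G (\<lambda>x. x)"
      by (rule E4[OF finI[of p1 p2] _ _ _ _ _ _ _ _ _ _ G_int_sg G_int_sg G_int_id G_int_id])
         (use i k j j0 ik False in auto)
    finally show ?thesis using False G_m1 by simp
  qed
  have "integral\<^sup>L (GA p1 p2) (hA i k) = (\<Sum>j<p2. integral\<^sup>L (GA p1 p2) (\<lambda>\<omega>. (\<sigma> j)^2 * (\<phi> \<omega> * (\<omega> (i,j) * \<omega> (k,j)))))"
    unfolding eq by (rule Bochner_Integration.integral_sum) (use it in auto)
  also have "\<dots> = (\<Sum>j<p2. if j = j0 then (\<sigma> j)^2 * (2 / pi) else 0)"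
    by (rule sum.cong) (auto simp: Ej)
  also have "\<dots> = (\<sigma> j0)^2 * (2 / pi)" using j0 by simp
  finally show "integral\<^sup>L (GA p1 p2) (hA i k) = (\<sigma> j0)^2 * (2 / pi)" .
qed


lemma hA_all:
  assumes "i < p1" "k < p1"
  shows "integrable (GA p1 p2) (hA i k)" "integral\<^sup>L (GA p1 p2) (hA i k) = (if i = k then 0 else (\<sigma> j0)^2 * (2 / pi))"
  using hA_diag[of i] hA_off[of i k] assms by (cases "i = k"; simp)+

lemma boundA:
  assumes p1: "p1 \<ge> 1"
  shows "integral\<^sup>L (GA p1 p2) (\<lambda>\<omega>. spec_norm p1 p1 (Wm p2 \<sigma> \<omega>)) \<ge> (real p1 - 1) * ((\<sigma> j0)^2 * (2 / pi))"
proof -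
  define u where "u \<omega> i = sg (\<omega> (i,j0)) / sqrt p1" for \<omega> :: "nat \<times> nat \<Rightarrow> real" and i
  define L where "L \<omega> = (\<Sum>i<p1. u \<omega> i * (\<Sum>k<p1. Wm p2 \<sigma> \<omega> i k * u \<omega> k))" for \<omega>
  have pp: "sqrt (real p1) * sqrt (real p1) = real p1" by simp
  have p0: "real p1 > 0" using p1 by simp
  have Lh: "L \<omega> = (\<Sum>i<p1. \<Sum>k<p1. hA i k \<omega>) / real p1" for \<omega>
  proof -
    have "L \<omega> = (\<Sum>i<p1. \<Sum>k<p1. hA i k \<omega> / (sqrt (real p1) * sqrt (real p1)))"
      unfolding L_def u_def hA_def by (simp add: sum_distrib_left algebra_simps)
    then show ?thesis unfolding pp by (simp add: sum_divide_distrib)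
  qed
  have uL2: "L2_set (u \<omega>) {..<p1} \<le> 1" for \<omega>
  proof -
    have "(u \<omega> i)^2 = 1 / real p1" for i
      unfolding u_def power_divide by (simp add: power2_eq_square)
    then have "L2_set (u \<omega>) {..<p1} = sqrt (real p1 * (1 / real p1))" by (simp add: L2_set_def)
    also have "\<dots> = 1" using p0 by simp
    finally show ?thesis by simp
  qed
  have LS: "L \<omega> \<le> spec_norm p1 p1 (Wm p2 \<sigma> \<omega>)" for \<omega>
    unfolding L_def by (rule spec_bil[OF uL2 uL2])
  have iL: "integrable (GA p1 p2) L"
    unfolding Lh by (intro integrable_divide Bochner_Integration.integrable_sum hA_all) auto
  have "integral\<^sup>L (GA p1 p2) L = (\<Sum>i<p1. \<Sum>k<p1. integral\<^sup>L (GA p1 p2) (hA i k)) / real p1"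
  proof -
    have i2: "integral\<^sup>L (GA p1 p2) (\<lambda>\<omega>. \<Sum>k<p1. hA i k \<omega>) = (\<Sum>k<p1. integral\<^sup>L (GA p1 p2) (hA i k))"
      if "i < p1" for i
      by (rule Bochner_Integration.integral_sum) (use that in \<open>auto intro: hA_all\<close>)
    have i1: "integral\<^sup>L (GA p1 p2) (\<lambda>\<omega>. \<Sum>i<p1. \<Sum>k<p1. hA i k \<omega>) = (\<Sum>i<p1. integral\<^sup>L (GA p1 p2) (\<lambda>\<omega>. \<Sum>k<p1. hA i k \<omega>))"
      by (rule Bochner_Integration.integral_sum) (auto intro!: Bochner_Integration.integrable_sum hA_all)
    show ?thesis unfolding Lh integral_divide_zero i1 by (simp add: i2)
  qed
  also have "\<dots> = (\<Sum>i<p1. (real p1 - 1) * ((\<sigma> j0)^2 * (2 / pi))) / real p1"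
    by (intro arg_cong2[where f="(/)"] sum.cong refl) (simp add: hA_all sum_if_ne)
  also have "\<dots> = (real p1 - 1) * ((\<sigma> j0)^2 * (2 / pi))" using p0 by simp
  finally have EL: "integral\<^sup>L (GA p1 p2) L = (real p1 - 1) * ((\<sigma> j0)^2 * (2 / pi))" .
  have "integral\<^sup>L (GA p1 p2) L \<le> integral\<^sup>L (GA p1 p2) (\<lambda>\<omega>. spec_norm p1 p1 (Wm p2 \<sigma> \<omega>))"
    by (rule integral_mono[OF iL S_int LS])
  then show ?thesis using EL by simp
qed

end

lemma comp_meas_A: "c \<in> A \<Longrightarrow> (\<lambda>\<eta>. \<eta> c) \<in> borel_measurable (PiM A (\<lambda>_. G))"
  by (rule comp_meas)

lemma pair_fun_meas:
  assumes "(\<lambda>z. \<Phi> (fst z) (snd z)) \<in> borel_measurable (borel \<Otimes>\<^sub>M borel)"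
    and "a \<in> A" "b \<in> A"
  shows "(\<lambda>\<eta>. \<Phi> (\<eta> a) (\<eta> b)) \<in> borel_measurable (PiM A (\<lambda>_. G))"
proof -
  have "(\<lambda>\<eta>. (\<eta> a, \<eta> b)) \<in> measurable (PiM A (\<lambda>_. G)) (borel \<Otimes>\<^sub>M borel)"
    by (intro measurable_Pair comp_meas_A assms)
  from measurable_compose[OF this assms(1)] show ?thesis by simp
qed

lemma indep_cols:
  fixes \<Phi> :: "nat \<Rightarrow> real \<Rightarrow> real \<Rightarrow> real"
  assumes i1: "i1 < p1" and i2: "i2 < p1" and J': "J' \<subseteq> {..<p2}" and j: "j < p2" "j \<notin> J'"
    and \<Phi>m: "\<And>l. (\<lambda>z. \<Phi> l (fst z) (snd z)) \<in> borel_measurable (borel \<Otimes>\<^sub>M borel)"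
  shows "GAp.indep_var p1 p2 borel (\<lambda>\<omega>. \<Sum>l\<in>J'. \<Phi> l (\<omega> (i1,l)) (\<omega> (i2,l)))
                               borel (\<lambda>\<omega>. \<Phi> j (\<omega> (i1,j)) (\<omega> (i2,j)))"
proof -
  define I where "I = {..<p1} \<times> {..<p2}"
  define A where "A = {i1,i2} \<times> J'"
  define B where "B = {i1,i2} \<times> {j}"
  have Ine: "I \<noteq> {}" using i1 j by (auto simp: I_def)
  have ci: "GAp.indep_vars p1 p2 (\<lambda>_. G) (\<lambda>c \<omega>. \<omega> c) I"
    using coord_indep[OF Ine] by (simp add: I_def)
  have AB: "A \<inter> B = {}" "A \<subseteq> I" "B \<subseteq> I" using i1 i2 J' j by (auto simp: A_def B_def I_def)
  have iv: "GAp.indep_var p1 p2 (PiM A (\<lambda>_. G)) (\<lambda>\<omega>. restrict (\<lambda>c. \<omega> c) A) (PiM B (\<lambda>_. G)) (\<lambda>\<omega>. restrict (\<lambda>c. \<omega> c) B)"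
    by (rule GAp.indep_var_restrict[OF ci AB])
  define F where "F \<eta> = (\<Sum>l\<in>J'. \<Phi> l (\<eta> (i1,l)) (\<eta> (i2,l)))" for \<eta> :: "nat \<times> nat \<Rightarrow> real"
  define H where "H \<eta> = \<Phi> j (\<eta> (i1,j)) (\<eta> (i2,j))" for \<eta> :: "nat \<times> nat \<Rightarrow> real"
  have Fm: "F \<in> borel_measurable (PiM A (\<lambda>_. G))"
    unfolding F_def by (intro borel_measurable_sum pair_fun_meas[OF \<Phi>m]) (auto simp: A_def)
  have Hm: "H \<in> borel_measurable (PiM B (\<lambda>_. G))"
    unfolding H_def by (intro pair_fun_meas[OF \<Phi>m]) (auto simp: B_def)
  have c: "GAp.indep_var p1 p2 borel (F \<circ> (\<lambda>\<omega>. restrict (\<lambda>c. \<omega> c) A)) borel (H \<circ> (\<lambda>\<omega>. restrict (\<lambda>c. \<omega> c) B))"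
    by (rule GAp.indep_var_compose[OF iv Fm Hm])
  have e1: "F \<circ> (\<lambda>\<omega>. restrict (\<lambda>c. \<omega> c) A) = (\<lambda>\<omega>. \<Sum>l\<in>J'. \<Phi> l (\<omega> (i1,l)) (\<omega> (i2,l)))"
    by (rule ext) (auto simp: F_def A_def intro!: sum.cong)
  have e2: "H \<circ> (\<lambda>\<omega>. restrict (\<lambda>c. \<omega> c) B) = (\<lambda>\<omega>. \<Phi> j (\<omega> (i1,j)) (\<omega> (i2,j)))"
    by (rule ext) (auto simp: H_def B_def)
  show ?thesis using c unfolding e1 e2 .
qed

lemma col_abs_bound:
  fixes \<Phi> :: "nat \<Rightarrow> real \<Rightarrow> real \<Rightarrow> real" and v :: "nat \<Rightarrow> real"
  assumes i1: "i1 < p1" and i2: "i2 < p1"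
    and \<Phi>m: "\<And>l. (\<lambda>z. \<Phi> l (fst z) (snd z)) \<in> borel_measurable (borel \<Otimes>\<^sub>M borel)"
    and int: "\<And>j k. j < p2 \<Longrightarrow> integrable (GA p1 p2) (\<lambda>\<omega>. (\<Phi> j (\<omega> (i1,j)) (\<omega> (i2,j))) ^ k)"
    and m0: "\<And>j. j < p2 \<Longrightarrow> integral\<^sup>L (GA p1 p2) (\<lambda>\<omega>. \<Phi> j (\<omega> (i1,j)) (\<omega> (i2,j))) = 0"
    and m2: "\<And>j. j < p2 \<Longrightarrow> integral\<^sup>L (GA p1 p2) (\<lambda>\<omega>. (\<Phi> j (\<omega> (i1,j)) (\<omega> (i2,j)))^2) = v j"
    and m4: "\<And>j. j < p2 \<Longrightarrow> integral\<^sup>L (GA p1 p2) (\<lambda>\<omega>. (\<Phi> j (\<omega> (i1,j)) (\<omega> (i2,j)))^4) \<le> K * (v j)^2"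
    and K: "3 \<le> K"
  shows "integrable (GA p1 p2) (\<lambda>\<omega>. \<bar>\<Sum>j<p2. \<Phi> j (\<omega> (i1,j)) (\<omega> (i2,j))\<bar>)"
    "integral\<^sup>L (GA p1 p2) (\<lambda>\<omega>. \<bar>\<Sum>j<p2. \<Phi> j (\<omega> (i1,j)) (\<omega> (i2,j))\<bar>) \<ge> sqrt (\<Sum>j<p2. v j) / sqrt K"
proof -
  define Y where "Y j \<omega> = \<Phi> j (\<omega> (i1,j)) (\<omega> (i2,j))" for j and \<omega> :: "nat \<times> nat \<Rightarrow> real"
  have fm: "(\<forall>k\<le>4. integrable (GA p1 p2) (\<lambda>\<omega>. (\<Sum>j\<in>{..<p2}. Y j \<omega>) ^ k)) \<and>
         integral\<^sup>L (GA p1 p2) (\<lambda>\<omega>. \<Sum>j\<in>{..<p2}. Y j \<omega>) = 0 \<and>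
         integral\<^sup>L (GA p1 p2) (\<lambda>\<omega>. (\<Sum>j\<in>{..<p2}. Y j \<omega>) ^ 2) = (\<Sum>j\<in>{..<p2}. integral\<^sup>L (GA p1 p2) (\<lambda>\<omega>. Y j \<omega>^2)) \<and>
         integral\<^sup>L (GA p1 p2) (\<lambda>\<omega>. (\<Sum>j\<in>{..<p2}. Y j \<omega>) ^ 4) \<le> K * (\<Sum>j\<in>{..<p2}. integral\<^sup>L (GA p1 p2) (\<lambda>\<omega>. Y j \<omega>^2))^2"
  proof (rule GAp.fourth_moment_sum[OF finite_lessThan _ _ _ _ K])
    fix j J' assume "j \<in> {..<p2}" "J' \<subseteq> {..<p2}" "j \<notin> J'"
    then show "GAp.indep_var p1 p2 borel (\<lambda>\<omega>. \<Sum>l\<in>J'. Y l \<omega>) borel (Y j)"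
      unfolding Y_def using indep_cols[OF i1 i2 _ _ _ \<Phi>m] by auto
  next
    fix j k assume "j \<in> {..<p2}" then show "integrable (GA p1 p2) (\<lambda>\<omega>. Y j \<omega> ^ k)"
      unfolding Y_def using int by auto
  next
    fix j assume "j \<in> {..<p2}" then show "integral\<^sup>L (GA p1 p2) (Y j) = 0"
      unfolding Y_def using m0 by auto
  next
    fix j assume "j \<in> {..<p2}" then show "integral\<^sup>L (GA p1 p2) (\<lambda>\<omega>. Y j \<omega> ^ 4) \<le> K * (integral\<^sup>L (GA p1 p2) (\<lambda>\<omega>. (Y j \<omega>)\<^sup>2))\<^sup>2"
      unfolding Y_def using m4 m2 by auto
  qed
  have sv: "(\<Sum>j\<in>{..<p2}. integral\<^sup>L (GA p1 p2) (\<lambda>\<omega>. Y j \<omega>^2)) = (\<Sum>j<p2. v j)"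
    by (rule sum.cong) (auto simp: Y_def m2)
  have Xm: "(\<lambda>\<omega>. \<Sum>j\<in>{..<p2}. Y j \<omega>) \<in> borel_measurable (GA p1 p2)"
    unfolding Y_def by (intro borel_measurable_sum pair_fun_meas[OF \<Phi>m]) (use i1 i2 in auto)
  have i2': "integrable (GA p1 p2) (\<lambda>\<omega>. (\<Sum>j\<in>{..<p2}. Y j \<omega>) ^ 2)" using fm by auto
  have i4': "integrable (GA p1 p2) (\<lambda>\<omega>. (\<Sum>j\<in>{..<p2}. Y j \<omega>) ^ 4)" using fm by auto
  have K0: "K > 0" using K by simp
  note al = GAp.abs_lower[OF Xm i2' i4' _ _ K0, of "\<Sum>j<p2. v j"]
  show "integrable (GA p1 p2) (\<lambda>\<omega>. \<bar>\<Sum>j<p2. \<Phi> j (\<omega> (i1,j)) (\<omega> (i2,j))\<bar>)"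
    using al fm sv unfolding Y_def by auto
  show "integral\<^sup>L (GA p1 p2) (\<lambda>\<omega>. \<bar>\<Sum>j<p2. \<Phi> j (\<omega> (i1,j)) (\<omega> (i2,j))\<bar>) \<ge> sqrt (\<Sum>j<p2. v j) / sqrt K"
    using al fm sv unfolding Y_def by auto
qed

lemma EYpow:
  assumes "i < p1" "k < p1" "j < p2" "i \<noteq> k"
  shows "integrable (GA p1 p2) (\<lambda>\<omega>. (c * (\<omega> (i,j) * \<omega> (k,j))) ^ n)"
        "integral\<^sup>L (GA p1 p2) (\<lambda>\<omega>. (c * (\<omega> (i,j) * \<omega> (k,j))) ^ n) = c^n * (integral\<^sup>L G (\<lambda>x. x^n) * integral\<^sup>L G (\<lambda>x. x^n))"
proof -
  have eq: "(\<lambda>\<omega>. (c * (\<omega> (i,j) * \<omega> (k,j))) ^ n) = (\<lambda>\<omega>. c^n * ((\<lambda>x. x^n) (\<omega> (i,j)) * (\<lambda>x. x^n) (\<omega> (k,j))))"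
    by (simp add: power_mult_distrib)
  have i: "integrable (GA p1 p2) (\<lambda>\<omega>. (\<lambda>x. x^n) (\<omega> (i,j)) * (\<lambda>x. x^n) (\<omega> (k,j)))"
    by (rule E2(1)[OF finI[of p1 p2] _ _ _ G_int_pow G_int_pow]) (use assms in auto)
  have e: "integral\<^sup>L (GA p1 p2) (\<lambda>\<omega>. (\<lambda>x. x^n) (\<omega> (i,j)) * (\<lambda>x. x^n) (\<omega> (k,j))) = integral\<^sup>L G (\<lambda>x. x^n) * integral\<^sup>L G (\<lambda>x. x^n)"
    by (rule E2(2)[OF finI[of p1 p2] _ _ _ G_int_pow G_int_pow]) (use assms in auto)
  show "integrable (GA p1 p2) (\<lambda>\<omega>. (c * (\<omega> (i,j) * \<omega> (k,j))) ^ n)"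
    unfolding eq by (rule integrable_mult_right[OF i])
  show "integral\<^sup>L (GA p1 p2) (\<lambda>\<omega>. (c * (\<omega> (i,j) * \<omega> (k,j))) ^ n) = c^n * (integral\<^sup>L G (\<lambda>x. x^n) * integral\<^sup>L G (\<lambda>x. x^n))"
    unfolding eq integral_mult_right_zero e ..
qed

lemma sigma4: "((\<sigma>::real)^2)^4 = 9 * ((\<sigma>^2)^2)^2 / 9" by simp

lemma boundB_col:
  assumes i: "i < p1" "i \<noteq> 0"
  shows "integrable (GA p1 p2) (\<lambda>\<omega>. \<bar>Wm p2 \<sigma> \<omega> i 0\<bar>)"
    "integral\<^sup>L (GA p1 p2) (\<lambda>\<omega>. \<bar>Wm p2 \<sigma> \<omega> i 0\<bar>) \<ge> sqrt (\<Sum>j<p2. (\<sigma> j)^4) / 3"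
proof -
  have p0: "0 < p1" using i by simp
  have W: "Wm p2 \<sigma> \<omega> i 0 = (\<Sum>j<p2. (\<lambda>j a b. (\<sigma> j)^2 * (a * b)) j (\<omega> (i,j)) (\<omega> (0,j)))" for \<omega>
    using i by (simp add: Wm_def)
  note cb = col_abs_bound[where \<Phi>="\<lambda>j a b. (\<sigma> j)^2 * (a * b)"
      and v="\<lambda>j. (\<sigma> j)^4" and K=9, OF i(1) p0]
  have hyps: "(\<lambda>z. (\<sigma> l)^2 * (fst z * snd z)) \<in> borel_measurable (borel \<Otimes>\<^sub>M borel)" for l
    by measurable
  have h2: "integrable (GA p1 p2) (\<lambda>\<omega>. ((\<sigma> j)^2 * (\<omega> (i,j) * \<omega> (0,j))) ^ k)" if "j < p2" for j k
    using EYpow(1)[of i p1 0 j p2] i that by auto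
  have h3: "integral\<^sup>L (GA p1 p2) (\<lambda>\<omega>. (\<sigma> j)^2 * (\<omega> (i,j) * \<omega> (0,j))) = 0" if "j < p2" for j
    using EYpow(2)[of i p1 0 j p2 "(\<sigma> j)^2" 1] i that G_m1 by auto
  have h4: "integral\<^sup>L (GA p1 p2) (\<lambda>\<omega>. ((\<sigma> j)^2 * (\<omega> (i,j) * \<omega> (0,j)))^2) = (\<sigma> j)^4" if "j < p2" for j
    using EYpow(2)[of i p1 0 j p2 "(\<sigma> j)^2" 2] i that G_m2 by auto
  have h5: "integral\<^sup>L (GA p1 p2) (\<lambda>\<omega>. ((\<sigma> j)^2 * (\<omega> (i,j) * \<omega> (0,j)))^4) \<le> 9 * ((\<sigma> j)^4)^2" if "j < p2" for j
    using EYpow(2)[of i p1 0 j p2 "(\<sigma> j)^2" 4] i that G_m4 by (auto simp: power_mult[symmetric])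
  have s9: "sqrt (9::real) = 3" by (rule real_sqrt_unique) auto
  show "integrable (GA p1 p2) (\<lambda>\<omega>. \<bar>Wm p2 \<sigma> \<omega> i 0\<bar>)"
    unfolding W using cb(1)[OF hyps h2 h3 h4 h5] by simp
  show "integral\<^sup>L (GA p1 p2) (\<lambda>\<omega>. \<bar>Wm p2 \<sigma> \<omega> i 0\<bar>) \<ge> sqrt (\<Sum>j<p2. (\<sigma> j)^4) / 3"
    unfolding W using cb(2)[OF hyps h2 h3 h4 h5] s9 by simp
qed


lemma sum_if_ne0: "0 < p \<Longrightarrow> (\<Sum>k<p. if k = 0 then 0 else c) = (real p - 1) * (c::real)"
  using sum_if_ne[of 0 p c] by (simp add: eq_commute)

lemma boundB:
  assumes p1: "p1 \<ge> 2"
  shows "integral\<^sup>L (GA p1 p2) (\<lambda>\<omega>. spec_norm p1 p1 (Wm p2 \<sigma> \<omega>)) \<ge> sqrt (real p1 - 1) * (sqrt (\<Sum>j<p2. (\<sigma> j)^4) / 3)"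
proof -
  define q where "q = real p1 - 1"
  have q1: "q \<ge> 1" using p1 by (simp add: q_def)
  have p0: "0 < p1" using p1 by simp
  define u where "u \<omega> i = (if i = 0 then 0 else sg (Wm p2 \<sigma> \<omega> i 0) / sqrt q)" for \<omega> :: "nat \<times> nat \<Rightarrow> real" and i
  define v where "v k = (if k = 0 then 1 else (0::real))" for k :: nat
  define L where "L \<omega> = (\<Sum>i<p1. u \<omega> i * (\<Sum>k<p1. Wm p2 \<sigma> \<omega> i k * v k))" for \<omega>
  have inner: "(\<Sum>k<p1. Wm p2 \<sigma> \<omega> i k * v k) = Wm p2 \<sigma> \<omega> i 0" for \<omega> i
  proof -
    have "(\<Sum>k<p1. Wm p2 \<sigma> \<omega> i k * v k) = (\<Sum>k<p1. if k = 0 then Wm p2 \<sigma> \<omega> i 0 else 0)"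
      by (rule sum.cong) (auto simp: v_def)
    also have "\<dots> = Wm p2 \<sigma> \<omega> i 0" using p0 by (simp add: sum.delta)
    finally show ?thesis .
  qed
  have Leq: "L \<omega> = (\<Sum>i<p1. if i = 0 then 0 else \<bar>Wm p2 \<sigma> \<omega> i 0\<bar> / sqrt q)" for \<omega>
    unfolding L_def inner by (intro sum.cong refl) (simp add: u_def sg_mult_self[symmetric])
  have uL2: "L2_set (u \<omega>) {..<p1} \<le> 1" for \<omega>
  proof -
    have "(u \<omega> i)^2 = (if i = 0 then 0 else 1 / q)" for i
      using q1 unfolding u_def power_divide by (simp add: power2_eq_square)
    then have "L2_set (u \<omega>) {..<p1} = sqrt ((real p1 - 1) * (1 / q))"
      by (simp add: L2_set_def sum_if_ne0[OF p0])
    also have "\<dots> = 1" using q1 by (simp add: q_def)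
    finally show ?thesis by simp
  qed
  have vL2: "L2_set v {..<p1} \<le> 1"
  proof -
    have "(v k)^2 = (if k = 0 then 1 else 0)" for k by (simp add: v_def)
    then have "L2_set v {..<p1} = sqrt 1" using p0 by (simp add: L2_set_def)
    then show ?thesis by simp
  qed
  have LS: "L \<omega> \<le> spec_norm p1 p1 (Wm p2 \<sigma> \<omega>)" for \<omega>
    unfolding L_def by (rule spec_bil[OF uL2 vL2])
  have it: "integrable (GA p1 p2) (\<lambda>\<omega>. if i = 0 then 0 else \<bar>Wm p2 \<sigma> \<omega> i 0\<bar> / sqrt q)" if "i < p1" for i
    using that by (cases "i = 0") (auto intro!: integrable_divide boundB_col(1))
  have iL: "integrable (GA p1 p2) L"
    unfolding Leq by (intro Bochner_Integration.integrable_sum it) auto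
  have "integral\<^sup>L (GA p1 p2) L = (\<Sum>i<p1. integral\<^sup>L (GA p1 p2) (\<lambda>\<omega>. if i = 0 then 0 else \<bar>Wm p2 \<sigma> \<omega> i 0\<bar> / sqrt q))"
    unfolding Leq by (rule Bochner_Integration.integral_sum) (use it in auto)
  also have "\<dots> \<ge> (\<Sum>i<p1. if i = 0 then 0 else (sqrt (\<Sum>j<p2. (\<sigma> j)^4) / 3) / sqrt q)"
  proof (rule sum_mono)
    fix i assume "i \<in> {..<p1}"
    show "(if i = 0 then 0 else (sqrt (\<Sum>j<p2. (\<sigma> j)^4) / 3) / sqrt q)
        \<le> integral\<^sup>L (GA p1 p2) (\<lambda>\<omega>. if i = 0 then 0 else \<bar>Wm p2 \<sigma> \<omega> i 0\<bar> / sqrt q)"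
    proof (cases "i = 0")
      case False
      have "sqrt (\<Sum>j<p2. (\<sigma> j)^4) / 3 \<le> integral\<^sup>L (GA p1 p2) (\<lambda>\<omega>. \<bar>Wm p2 \<sigma> \<omega> i 0\<bar>)"
        by (rule boundB_col(2)) (use \<open>i \<in> {..<p1}\<close> False in auto)
      then have "(sqrt (\<Sum>j<p2. (\<sigma> j)^4) / 3) / sqrt q \<le> integral\<^sup>L (GA p1 p2) (\<lambda>\<omega>. \<bar>Wm p2 \<sigma> \<omega> i 0\<bar>) / sqrt q"
        using q1 by (intro divide_right_mono) auto
      then show ?thesis using False by simp
    qed simp
  qed
  also have "(\<Sum>i<p1. if i = 0 then 0 else (sqrt (\<Sum>j<p2. (\<sigma> j)^4) / 3) / sqrt q)
      = q * ((sqrt (\<Sum>j<p2. (\<sigma> j)^4) / 3) / sqrt q)"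
    using sum_if_ne0[OF p0] by (simp add: q_def)
  also have "\<dots> = sqrt q * (sqrt (\<Sum>j<p2. (\<sigma> j)^4) / 3)"
  proof -
    have "q * ((sqrt (\<Sum>j<p2. (\<sigma> j)^4) / 3) / sqrt q) = (q / sqrt q) * (sqrt (\<Sum>j<p2. (\<sigma> j)^4) / 3)"
      by simp
    also have "q / sqrt q = sqrt q" using q1 by (simp add: real_div_sqrt)
    finally show ?thesis .
  qed
  finally have "integral\<^sup>L (GA p1 p2) L \<ge> sqrt q * (sqrt (\<Sum>j<p2. (\<sigma> j)^4) / 3)" .
  moreover have "integral\<^sup>L (GA p1 p2) L \<le> integral\<^sup>L (GA p1 p2) (\<lambda>\<omega>. spec_norm p1 p1 (Wm p2 \<sigma> \<omega>))"
    by (rule integral_mono[OF iL S_int LS])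
  ultimately show ?thesis by (simp add: q_def)
qed

lemma q_expand: "(x*x - 1::real)^k = (\<Sum>i\<le>k. real (k choose i) * (x^(2*i) * (-1)^(k-i)))"
proof -
  have "(x*x - 1::real)^k = (x*x + (-1))^k" by simp
  also have "\<dots> = (\<Sum>i\<le>k. real (k choose i) * (x*x)^i * (-1)^(k-i))" by (rule binomial_ring)
  also have "\<dots> = (\<Sum>i\<le>k. real (k choose i) * (x^(2*i) * (-1)^(k-i)))"
    by (intro sum.cong refl) (simp add: power_mult power2_eq_square mult.assoc)
  finally show ?thesis .
qed

lemma G_int_q: "integrable G (\<lambda>x. (x*x - 1)^k)"
  unfolding q_expand
  by (intro Bochner_Integration.integrable_sum integrable_mult_right integrable_mult_left G_int_pow)

lemma G_E_q: "integral\<^sup>L G (\<lambda>x. (x*x - 1)^k) = (\<Sum>i\<le>k. real (k choose i) * (integral\<^sup>L G (\<lambda>x. x^(2*i)) * (-1)^(k-i)))"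
  unfolding q_expand
  by (subst Bochner_Integration.integral_sum)
     (auto intro!: integrable_mult_right integrable_mult_left G_int_pow sum.cong)

lemma G_E_q1: "integral\<^sup>L G (\<lambda>x. (x*x - 1)) = 0"
  using G_E_q[of 1] G.prob_space G_m2 by (simp add: power2_eq_square)

lemma G_E_q2: "integral\<^sup>L G (\<lambda>x. (x*x - 1)^2) = 2"
  using G_E_q[of 2] sum2[of "\<lambda>i. integral\<^sup>L G (\<lambda>x. x^(2*i))" "\<lambda>j. (-1)^j"] G.prob_space G_m2 G_m4
  by simp

lemma G_E_q4: "integral\<^sup>L G (\<lambda>x. (x*x - 1)^4) = 60"
  using G_E_q[of 4] sum4[of "\<lambda>i. integral\<^sup>L G (\<lambda>x. x^(2*i))" "\<lambda>j. (-1)^j"] G.prob_space G_m2 G_m4 G_m6 G_m8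
  by simp


lemma EQpow:
  assumes "i < p1" "j < p2"
  shows "integrable (GA p1 p2) (\<lambda>\<omega>. (c * (\<omega> (i,j) * \<omega> (i,j) - 1)) ^ n)"
        "integral\<^sup>L (GA p1 p2) (\<lambda>\<omega>. (c * (\<omega> (i,j) * \<omega> (i,j) - 1)) ^ n) = c^n * integral\<^sup>L G (\<lambda>x. (x*x - 1)^n)"
proof -
  have eq: "(\<lambda>\<omega>. (c * (\<omega> (i,j) * \<omega> (i,j) - 1)) ^ n) = (\<lambda>\<omega>. c^n * (\<lambda>x. (x*x - 1)^n) (\<omega> (i,j)))"
    by (simp add: power_mult_distrib)
  have i: "integrable (GA p1 p2) (\<lambda>\<omega>. (\<lambda>x. (x*x - 1)^n) (\<omega> (i,j)))"
    by (rule E1(1)[OF finI[of p1 p2] _ G_int_q]) (use assms in auto)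
  have e: "integral\<^sup>L (GA p1 p2) (\<lambda>\<omega>. (\<lambda>x. (x*x - 1)^n) (\<omega> (i,j))) = integral\<^sup>L G (\<lambda>x. (x*x - 1)^n)"
    by (rule E1(2)[OF finI[of p1 p2] _ G_int_q]) (use assms in auto)
  show "integrable (GA p1 p2) (\<lambda>\<omega>. (c * (\<omega> (i,j) * \<omega> (i,j) - 1)) ^ n)"
    unfolding eq by (rule integrable_mult_right[OF i])
  show "integral\<^sup>L (GA p1 p2) (\<lambda>\<omega>. (c * (\<omega> (i,j) * \<omega> (i,j) - 1)) ^ n) = c^n * integral\<^sup>L G (\<lambda>x. (x*x - 1)^n)"
    unfolding eq integral_mult_right_zero e ..
qed

lemma boundC_col:
  assumes p0: "0 < p1"
  shows "integrable (GA p1 p2) (\<lambda>\<omega>. \<bar>Wm p2 \<sigma> \<omega> 0 0\<bar>)"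
    "integral\<^sup>L (GA p1 p2) (\<lambda>\<omega>. \<bar>Wm p2 \<sigma> \<omega> 0 0\<bar>) \<ge> sqrt (\<Sum>j<p2. 2 * (\<sigma> j)^4) / sqrt 15"
proof -
  have W: "Wm p2 \<sigma> \<omega> 0 0 = (\<Sum>j<p2. (\<lambda>j a b. (\<sigma> j)^2 * (a * b - 1)) j (\<omega> (0,j)) (\<omega> (0,j)))" for \<omega>
    by (simp add: Wm_def right_diff_distrib sum_subtractf)
  note cb = col_abs_bound[where \<Phi>="\<lambda>j a b. (\<sigma> j)^2 * (a * b - 1)"
      and v="\<lambda>j. 2 * (\<sigma> j)^4" and K=15, OF p0 p0]
  have hyps: "(\<lambda>z. (\<sigma> l)^2 * (fst z * snd z - 1)) \<in> borel_measurable (borel \<Otimes>\<^sub>M borel)" for l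
    by measurable
  have h2: "integrable (GA p1 p2) (\<lambda>\<omega>. ((\<sigma> j)^2 * (\<omega> (0,j) * \<omega> (0,j) - 1)) ^ k)" if "j < p2" for j k
    using EQpow(1)[of 0 p1 j p2] p0 that by auto
  have h3: "integral\<^sup>L (GA p1 p2) (\<lambda>\<omega>. (\<sigma> j)^2 * (\<omega> (0,j) * \<omega> (0,j) - 1)) = 0" if "j < p2" for j
    using EQpow(2)[of 0 p1 j p2 "(\<sigma> j)^2" 1] p0 that G_E_q1 by auto
  have h4: "integral\<^sup>L (GA p1 p2) (\<lambda>\<omega>. ((\<sigma> j)^2 * (\<omega> (0,j) * \<omega> (0,j) - 1))^2) = 2 * (\<sigma> j)^4" if "j < p2" for j
    using EQpow(2)[of 0 p1 j p2 "(\<sigma> j)^2" 2] p0 that G_E_q2 by (auto simp: power_mult[symmetric])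
  have h5: "integral\<^sup>L (GA p1 p2) (\<lambda>\<omega>. ((\<sigma> j)^2 * (\<omega> (0,j) * \<omega> (0,j) - 1))^4) \<le> 15 * (2 * (\<sigma> j)^4)^2" if "j < p2" for j
    using EQpow(2)[of 0 p1 j p2 "(\<sigma> j)^2" 4] p0 that G_E_q4 by (auto simp: power_mult[symmetric] power_mult_distrib)
  show "integrable (GA p1 p2) (\<lambda>\<omega>. \<bar>Wm p2 \<sigma> \<omega> 0 0\<bar>)"
    unfolding W using cb(1)[OF hyps h2 h3 h4 h5] by simp
  show "integral\<^sup>L (GA p1 p2) (\<lambda>\<omega>. \<bar>Wm p2 \<sigma> \<omega> 0 0\<bar>) \<ge> sqrt (\<Sum>j<p2. 2 * (\<sigma> j)^4) / sqrt 15"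
    unfolding W using cb(2)[OF hyps h2 h3 h4 h5] by simp
qed

lemma boundC:
  assumes p0: "0 < p1"
  shows "integral\<^sup>L (GA p1 p2) (\<lambda>\<omega>. spec_norm p1 p1 (Wm p2 \<sigma> \<omega>)) \<ge> sqrt (\<Sum>j<p2. (\<sigma> j)^4) / 3"
proof -
  define L where "L \<omega> = \<bar>Wm p2 \<sigma> \<omega> 0 0\<bar>" for \<omega>
  have LS: "L \<omega> \<le> spec_norm p1 p1 (Wm p2 \<sigma> \<omega>)" for \<omega>
  proof -
    define u where "u i = (if i = 0 then sg (Wm p2 \<sigma> \<omega> 0 0) else 0)" for i :: nat
    define v where "v k = (if k = 0 then 1 else (0::real))" for k :: nat
    have uL2: "L2_set u {..<p1} \<le> 1"
    proof -
      have "(u i)^2 = (if i = 0 then 1 else 0)" for i by (simp add: u_def power2_eq_square)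
      then have "L2_set u {..<p1} = sqrt 1" using p0 by (simp add: L2_set_def)
      then show ?thesis by simp
    qed
    have vL2: "L2_set v {..<p1} \<le> 1"
    proof -
      have "(v k)^2 = (if k = 0 then 1 else 0)" for k by (simp add: v_def)
      then have "L2_set v {..<p1} = sqrt 1" using p0 by (simp add: L2_set_def)
      then show ?thesis by simp
    qed
    have inner: "(\<Sum>k<p1. Wm p2 \<sigma> \<omega> i k * v k) = Wm p2 \<sigma> \<omega> i 0" for i
    proof -
      have "(\<Sum>k<p1. Wm p2 \<sigma> \<omega> i k * v k) = (\<Sum>k<p1. if k = 0 then Wm p2 \<sigma> \<omega> i 0 else 0)"
        by (rule sum.cong) (auto simp: v_def)
      also have "\<dots> = Wm p2 \<sigma> \<omega> i 0" using p0 by (simp add: sum.delta)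
      finally show ?thesis .
    qed
    have "(\<Sum>i<p1. u i * (\<Sum>k<p1. Wm p2 \<sigma> \<omega> i k * v k)) = (\<Sum>i<p1. if i = 0 then L \<omega> else 0)"
      unfolding inner by (rule sum.cong) (auto simp: u_def L_def sg_mult_self)
    also have "\<dots> = L \<omega>" using p0 by (simp add: sum.delta)
    finally have "L \<omega> = (\<Sum>i<p1. u i * (\<Sum>k<p1. Wm p2 \<sigma> \<omega> i k * v k))" by simp
    also have "\<dots> \<le> spec_norm p1 p1 (Wm p2 \<sigma> \<omega>)" by (rule spec_bil[OF uL2 vL2])
    finally show ?thesis .
  qed
  have "integral\<^sup>L (GA p1 p2) L \<le> integral\<^sup>L (GA p1 p2) (\<lambda>\<omega>. spec_norm p1 p1 (Wm p2 \<sigma> \<omega>))"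
    by (rule integral_mono[OF _ S_int LS]) (unfold L_def, rule boundC_col(1)[OF p0])
  moreover have "integral\<^sup>L (GA p1 p2) L \<ge> sqrt (\<Sum>j<p2. 2 * (\<sigma> j)^4) / sqrt 15"
    unfolding L_def by (rule boundC_col(2)[OF p0])
  moreover have "sqrt (\<Sum>j<p2. (\<sigma> j)^4) / 3 \<le> sqrt (\<Sum>j<p2. 2 * (\<sigma> j)^4) / sqrt 15"
  proof -
    define X where "X = (\<Sum>j<p2. (\<sigma> j)^4)"
    have X0: "X \<ge> 0" unfolding X_def by (intro sum_nonneg) (simp add: zero_le_even_power)
    have s3: "sqrt (9::real) = 3" by (rule real_sqrt_unique) auto
    have "sqrt X / 3 = sqrt (X / 9)" by (simp add: real_sqrt_divide s3)
    also have "\<dots> \<le> sqrt (2 * X / 15)" using X0 by (intro real_sqrt_le_mono) simp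
    also have "\<dots> = sqrt (\<Sum>j<p2. 2 * (\<sigma> j)^4) / sqrt 15"
      by (simp add: real_sqrt_divide X_def sum_distrib_left)
    finally show ?thesis by (simp add: X_def)
  qed
  ultimately show ?thesis by linarith
qed

theorem theorem3p7:
  shows "\<exists>c>0. \<forall>(p1::nat) (p2::nat) (\<sigma>::nat \<Rightarrow> real).
     0 < p2 \<longrightarrow> (\<forall>j<p2. 0 \<le> \<sigma> j) \<longrightarrow>
     (let M = gauss_array_space p1 p2;
          Z = (\<lambda>\<omega> i j. \<sigma> j * \<omega> (i, j));
          ZZt = (\<lambda>\<omega> i k. \<Sum>j<p2. Z \<omega> i j * Z \<omega> k j);
          EZZt = (\<lambda>i k. integral\<^sup>L M (\<lambda>\<omega>. ZZt \<omega> i k))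
      in integral\<^sup>L M (\<lambda>\<omega>. spec_norm p1 p1 (\<lambda>i k. ZZt \<omega> i k - EZZt i k))
         \<ge> c * (sqrt (real p1 * (\<Sum>j<p2. (\<sigma> j) ^ 4))
                + real p1 * (MAX j\<in>{..<p2}. (\<sigma> j)\<^sup>2)))"
proof (rule exI[of _ "1/20"], intro conjI allI impI)
  show "(0::real) < 1/20" by simp
  fix p1 p2 :: nat and \<sigma> :: "nat \<Rightarrow> real"
  assume p2: "0 < p2" and "\<forall>j<p2. 0 \<le> \<sigma> j"
  define E where "E = integral\<^sup>L (GA p1 p2) (\<lambda>\<omega>. spec_norm p1 p1 (Wm p2 \<sigma> \<omega>))"
  define X where "X = (\<Sum>j<p2. (\<sigma> j)^4)"
  define m where "m = (MAX j\<in>{..<p2}. (\<sigma> j)\<^sup>2)"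
  have eqW: "(\<Sum>j<p2. \<sigma> j * \<omega> (i, j) * (\<sigma> j * \<omega> (k, j))) - integral\<^sup>L (GA p1 p2) (\<lambda>\<omega>. \<Sum>j<p2. \<sigma> j * \<omega> (i, j) * (\<sigma> j * \<omega> (k, j)))
      = Wm p2 \<sigma> \<omega> i k" if "i < p1" "k < p1" for \<omega> i k
    unfolding EZZt[OF that] Wm_def
    by (simp add: power2_eq_square algebra_simps)
  have LHS: "integral\<^sup>L (GA p1 p2) (\<lambda>\<omega>. spec_norm p1 p1 (\<lambda>i k. (\<Sum>j<p2. \<sigma> j * \<omega> (i, j) * (\<sigma> j * \<omega> (k, j))) - integral\<^sup>L (GA p1 p2) (\<lambda>\<omega>. \<Sum>j<p2. \<sigma> j * \<omega> (i, j) * (\<sigma> j * \<omega> (k, j))))) = E"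
    unfolding E_def by (intro Bochner_Integration.integral_cong refl spec_norm_cong eqW)
  have E0: "E \<ge> 0" unfolding E_def by (intro integral_nonneg_AE AE_I2 spec_nonneg)
  obtain j0 where j0: "j0 < p2" "m = (\<sigma> j0)^2"
  proof -
    have "m \<in> (\<lambda>j. (\<sigma> j)^2) ` {..<p2}" unfolding m_def using p2 by (intro Max_in) auto
    then show ?thesis using that by auto
  qed
  have m0: "m \<ge> 0" using j0 by simp
  have X0: "X \<ge> 0" unfolding X_def by (intro sum_nonneg) (simp add: zero_le_even_power)
  have mX: "m \<le> sqrt X"
  proof -
    have "m^2 = (\<sigma> j0)^4" using j0 by simp
    also have "\<dots> \<le> X" unfolding X_def using j0 by (intro member_le_sum) (auto simp: zero_le_even_power)
    finally have "m^2 \<le> X" .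
    then show ?thesis using m0 by (simp add: real_le_rsqrt)
  qed
  have main: "1/20 * (sqrt (real p1 * X) + real p1 * m) \<le> E"
  proof (cases "p1 = 0")
    case True then show ?thesis using E0 by simp
  next
    case False
    show ?thesis
    proof (cases "p1 = 1")
      case True
      have "sqrt X / 3 \<le> E" unfolding E_def X_def by (rule boundC) (simp add: True)
      then have "sqrt X + m \<le> 20 * E" using mX E0 by linarith
      then show ?thesis using True by simp
    next
      case False
      then have p12: "p1 \<ge> 2" using \<open>p1 \<noteq> 0\<close> by simp
      have A: "(real p1 - 1) * ((\<sigma> j0)^2 * (2 / pi)) \<le> E" unfolding E_def
        by (rule boundA[OF j0(1)]) (use p12 in simp)
      have B: "sqrt (real p1 - 1) * (sqrt X / 3) \<le> E" unfolding E_def X_def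
        by (rule boundB[OF p12])
      have pi2: "2 / pi \<ge> 1/2" using pi_less_4 pi_gt_zero by (simp add: field_simps)
      have q1: "real p1 - 1 \<ge> 1" using p12 by simp
      have "(real p1 - 1) * (m * (1/2)) \<le> (real p1 - 1) * (m * (2 / pi))"
        using q1 m0 pi2 by (intro mult_left_mono) auto
      then have A': "(real p1 - 1) * m \<le> 2 * E" using A j0 by simp
      have "2 * m \<le> real p1 * m" using p12 m0 by (intro mult_right_mono) auto
      then have "real p1 * m \<le> 2 * ((real p1 - 1) * m)" by (simp add: algebra_simps)
      then have P1: "real p1 * m \<le> 4 * E" using A' by linarith
      have "sqrt (real p1 * X) \<le> sqrt (2 * (real p1 - 1) * X)"
        using q1 X0 by (intro real_sqrt_le_mono mult_right_mono) auto
      also have "\<dots> = sqrt 2 * (sqrt (real p1 - 1) * sqrt X)" by (simp only: real_sqrt_mult mult.assoc)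
      also have "\<dots> \<le> 2 * (sqrt (real p1 - 1) * sqrt X)"
      proof (rule mult_right_mono)
        show "sqrt 2 \<le> (2::real)" by (rule real_sqrt_le_iff[THEN iffD2, of 2 4, simplified]) 
      qed (use q1 X0 in simp)
      also have "\<dots> \<le> 6 * E" using B by (simp add: mult.commute)
      finally have P2: "sqrt (real p1 * X) \<le> 6 * E" .
      show ?thesis using P1 P2 E0 by simp
    qed
  qed
  show "let M = gauss_array_space p1 p2;
          Z = (\<lambda>\<omega> i j. \<sigma> j * \<omega> (i, j));
          ZZt = (\<lambda>\<omega> i k. \<Sum>j<p2. Z \<omega> i j * Z \<omega> k j);
          EZZt = (\<lambda>i k. integral\<^sup>L M (\<lambda>\<omega>. ZZt \<omega> i k))
      in integral\<^sup>L M (\<lambda>\<omega>. spec_norm p1 p1 (\<lambda>i k. ZZt \<omega> i k - EZZt i k))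
         \<ge> 1/20 * (sqrt (real p1 * (\<Sum>j<p2. (\<sigma> j) ^ 4))
                + real p1 * (MAX j\<in>{..<p2}. (\<sigma> j)\<^sup>2))"
    unfolding Let_def gauss_array_space_def LHS using main by (simp add: X_def m_def)
qed


end
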